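(* Let $S$ be an infinite set, $\mathbb F_S$ the free group on $S$, and $T\subset S$ a subset with $|T|=|S|$; let $\Gamma_T\le\mathbb F_S$ be the subgroup generated by $T$. Then there is an amenable free action $\alpha\colon\mathbb F_S\curvearrowright\{0,1\}^S$ (product topology) whose restriction to $\Gamma_T$ is minimal.
   Context: $\mathbb F_S$ is discrete. An action by homeomorphisms of a discrete group $\Gamma$ on a compact space $X$ is amenable if there is a net of continuous maps $m_i\colon X\to\mathrm{Prob}(\Gamma)$ with $\sup_{x\in X}\|m_i(g.x)-g.m_i(x)\|_1\to0$ for every $g\in\Gamma$; free means $g.x\neq x$ for all $x$ and $g\neq e$; minimal means every orbit is dense. *)

theory Defs
  imports "HOL-Analysis.Analysis" "HOL-Algebra.Algebra" "HOL-Library.Equipollence"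
begin

text \<open>A letter (s, True) stands for the generator s, (s, False) for its inverse.\<close>

fun reduced :: "('a \<times> bool) list \<Rightarrow> bool" where
  "reduced [] = True"
| "reduced [x] = True"
| "reduced (x # y # zs) = (\<not> (fst x = fst y \<and> snd x \<noteq> snd y) \<and> reduced (y # zs))"

fun red :: "('a \<times> bool) list \<Rightarrow> ('a \<times> bool) list" where
  "red [] = []"
| "red (x # xs) = (case red xs of
       [] \<Rightarrow> [x]
     | y # ys \<Rightarrow> (if fst x = fst y \<and> snd x \<noteq> snd y then ys else x # y # ys))"

definition free_group :: "'a set \<Rightarrow> ('a \<times> bool) list monoid" where
  "free_group S = \<lparr> carrier = {w. fst ` set w \<subseteq> S \<and> reduced w},
                    mult = (\<lambda>u v. red (u @ v)),
                    one = [] \<rparr>"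

definition free_gen :: "'a \<Rightarrow> ('a \<times> bool) list" where
  "free_gen s = [(s, True)]"

definition cantor_top :: "'a set \<Rightarrow> ('a \<Rightarrow> bool) topology" where
  "cantor_top S = product_topology (\<lambda>_. discrete_topology (UNIV :: bool set)) S"

definition is_action :: "('g, 'b) monoid_scheme \<Rightarrow> 'x topology \<Rightarrow> ('g \<Rightarrow> 'x \<Rightarrow> 'x) \<Rightarrow> bool" where
  "is_action Gr Xt act \<longleftrightarrow>
     (\<forall>g \<in> carrier Gr. homeomorphic_map Xt Xt (act g)) \<and>
     (\<forall>x \<in> topspace Xt. act (one Gr) x = x) \<and>
     (\<forall>g \<in> carrier Gr. \<forall>h \<in> carrier Gr. \<forall>x \<in> topspace Xt.
        act (mult Gr g h) x = act g (act h x))"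

definition free_action :: "('g, 'b) monoid_scheme \<Rightarrow> 'x topology \<Rightarrow> ('g \<Rightarrow> 'x \<Rightarrow> 'x) \<Rightarrow> bool" where
  "free_action Gr Xt act \<longleftrightarrow>
     (\<forall>g \<in> carrier Gr. g \<noteq> one Gr \<longrightarrow> (\<forall>x \<in> topspace Xt. act g x \<noteq> x))"

definition minimal_on :: "'g set \<Rightarrow> 'x topology \<Rightarrow> ('g \<Rightarrow> 'x \<Rightarrow> 'x) \<Rightarrow> bool" where
  "minimal_on H Xt act \<longleftrightarrow>
     (\<forall>x \<in> topspace Xt. Xt closure_of ((\<lambda>g. act g x) ` H) = topspace Xt)"

definition prob_fun :: "('g, 'b) monoid_scheme \<Rightarrow> ('g \<Rightarrow> real) \<Rightarrow> bool" where
  "prob_fun Gr \<mu> \<longleftrightarrow> (\<forall>h. \<mu> h \<ge> 0) \<and> (\<forall>h. h \<notin> carrier Gr \<longrightarrow> \<mu> h = 0)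
                      \<and> (\<mu> has_sum 1) (carrier Gr)"

definition translate :: "('g, 'b) monoid_scheme \<Rightarrow> 'g \<Rightarrow> ('g \<Rightarrow> real) \<Rightarrow> ('g \<Rightarrow> real)" where
  "translate Gr g \<mu> = (\<lambda>h. if h \<in> carrier Gr then \<mu> (mult Gr (m_inv Gr g) h) else 0)"

definition l1_dist :: "('g, 'b) monoid_scheme \<Rightarrow> ('g \<Rightarrow> real) \<Rightarrow> ('g \<Rightarrow> real) \<Rightarrow> real" where
  "l1_dist Gr \<mu> \<nu> = infsum (\<lambda>h. \<bar>\<mu> h - \<nu> h\<bar>) (carrier Gr)"

text \<open>Amenable action: a net (m_i) of continuous maps X \<rightarrow> Prob(G) with
  sup_x |m_i(g.x) - g.m_i(x)|_1 \<rightarrow> 0 for all g.  Equivalently (indexing the net by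
  pairs (F, \<epsilon>)): for every finite F \<subseteq> G and \<epsilon> > 0 there is one such map with
  sup_x |m(g.x) - g.m(x)|_1 \<le> \<epsilon> for all g \<in> F.  Prob(G) carries the pointwise
  (weak-* ) topology, which on Prob(G) coincides with the norm topology.\<close>
definition amenable_action :: "('g, 'b) monoid_scheme \<Rightarrow> 'x topology \<Rightarrow> ('g \<Rightarrow> 'x \<Rightarrow> 'x) \<Rightarrow> bool" where
  "amenable_action Gr Xt act \<longleftrightarrow>
     (\<forall>F \<epsilon>. finite F \<and> F \<subseteq> carrier Gr \<and> \<epsilon> > 0 \<longrightarrow>
        (\<exists>m :: 'x \<Rightarrow> 'g \<Rightarrow> real.
           (\<forall>x \<in> topspace Xt. prob_fun Gr (m x)) \<and>
           (\<forall>h. continuous_map Xt euclideanreal (\<lambda>x. m x h)) \<and>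
           (\<forall>g \<in> F. \<forall>x \<in> topspace Xt. l1_dist Gr (m (act g x)) (translate Gr g (m x)) \<le> \<epsilon>)))"

end

theory Submission
  imports Defs
begin

definition ilet :: "'a \<times> bool \<Rightarrow> 'a \<times> bool" where "ilet x = (fst x, \<not> snd x)"

definition cr :: "'a \<times> bool \<Rightarrow> ('a \<times> bool) list \<Rightarrow> ('a \<times> bool) list" where
  "cr x r = (case r of [] \<Rightarrow> [x] | y # ys \<Rightarrow> (if fst x = fst y \<and> snd x \<noteq> snd y then ys else x # y # ys))"

declare red.simps(2)[simp del]

lemma ilet_ilet[simp]: "ilet (ilet x) = x" by (simp add: ilet_def)
lemma fst_ilet[simp]: "fst (ilet x) = fst x" by (simp add: ilet_def)

lemma red_Cons: "red (x # xs) = cr x (red xs)"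
  by (simp add: cr_def red.simps(2))

lemma reduced_Cons_iff: "reduced (x # xs) \<longleftrightarrow> reduced xs \<and> (xs = [] \<or> hd xs \<noteq> ilet x)"
  by (cases xs) (auto simp: ilet_def prod_eq_iff)

lemma reduced_cr: "reduced r \<Longrightarrow> reduced (cr x r)"
proof (cases r)
  case (Cons y ys)
  assume r: "reduced r"
  show ?thesis
  proof (cases "fst x = fst y \<and> snd x \<noteq> snd y")
    case True then show ?thesis using Cons r by (simp add: cr_def reduced_Cons_iff)
  next
    case False then show ?thesis using Cons r by (auto simp: cr_def ilet_def)
  qed
qed (simp add: cr_def)

lemma reduced_red: "reduced (red w)"
  by (induction w) (auto simp: red_Cons reduced_cr)

lemma cr_reduced: "reduced (x # r) \<Longrightarrow> cr x r = x # r"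
  by (cases r) (auto simp: cr_def)

lemma red_reduced: "reduced w \<Longrightarrow> red w = w"
proof (induction w)
  case Nil then show ?case by simp
next
  case (Cons x w)
  then have "reduced w" by (simp add: reduced_Cons_iff)
  with Cons show ?case by (simp add: red_Cons cr_reduced)
qed

lemma cr_cancel_any: "cr x (cr (ilet x) r) = r" if "reduced r"
proof (cases r)
  case Nil then show ?thesis by (simp add: cr_def ilet_def)
next
  case (Cons y ys)
  show ?thesis
  proof (cases "fst (ilet x) = fst y \<and> snd (ilet x) \<noteq> snd y")
    case True
    then have "cr (ilet x) r = ys" using Cons by (simp add: cr_def)
    moreover have "cr x ys = r"
    proof (cases ys)
      case Nil then show ?thesis using Cons True by (simp add: cr_def ilet_def prod_eq_iff)
    next
      case (Cons z zs)
      then show ?thesis using \<open>r = y # ys\<close> True that by (auto simp: cr_def ilet_def prod_eq_iff)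
    qed
    ultimately show ?thesis by simp
  next
    case False
    then have "cr (ilet x) r = ilet x # r" using Cons by (simp add: cr_def)
    then show ?thesis by (simp add: cr_def ilet_def)
  qed
qed

lemma red_append: "red (u @ v) = foldr cr u (red v)"
  by (induction u) (auto simp: red_Cons)

locale invfam =
  fixes f :: "'a \<times> bool \<Rightarrow> 'b \<Rightarrow> 'b" and M :: "'b set"
  assumes closed: "\<And>a x. x \<in> M \<Longrightarrow> f a x \<in> M"
    and inv: "\<And>a x. x \<in> M \<Longrightarrow> f (ilet a) (f a x) = x"
begin

lemma foldr_closed: "x \<in> M \<Longrightarrow> foldr f w x \<in> M"
  by (induction w) (auto simp: closed)

lemma foldr_cr: "x \<in> M \<Longrightarrow> foldr f (cr a r) x = f a (foldr f r x)"
proof (cases r)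
  case Nil then show "foldr f (cr a r) x = f a (foldr f r x)" by (simp add: cr_def)
next
  case (Cons y ys)
  assume xM: "x \<in> M"
  show ?thesis
  proof (cases "fst a = fst y \<and> snd a \<noteq> snd y")
    case True
    then have "y = ilet a" by (auto simp: ilet_def prod_eq_iff)
    then show ?thesis using Cons True inv[of "foldr f ys x" "ilet a"] foldr_closed[OF xM, of ys]
      by (simp add: cr_def)
  next
    case False
    then show ?thesis using Cons by (auto simp: cr_def)
  qed
qed

lemma foldr_red: "x \<in> M \<Longrightarrow> foldr f (red w) x = foldr f w x"
proof (induction w)
  case Nil then show ?case by simp
next
  case (Cons a w)
  have "foldr f (red (a # w)) x = foldr f (cr a (red w)) x" by (simp add: red_Cons)
  also have "\<dots> = f a (foldr f (red w) x)"
    by (rule foldr_cr) (use Cons in auto)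
  also have "\<dots> = f a (foldr f w x)" using Cons by simp
  finally show ?case by simp
qed

end

definition iw :: "('a \<times> bool) list \<Rightarrow> ('a \<times> bool) list" where
  "iw w = rev (map ilet w)"

lemma iw_iw[simp]: "iw (iw w) = w" by (simp add: iw_def rev_map comp_def)
lemma iw_append: "iw (u @ v) = iw v @ iw u" by (simp add: iw_def)
lemma iw_Cons: "iw (a # w) = iw w @ [ilet a]" by (simp add: iw_def)
lemma length_iw[simp]: "length (iw w) = length w" by (simp add: iw_def)
lemma set_iw_fst: "fst ` set (iw w) = fst ` set w" by (force simp: iw_def image_iff)

context invfam begin
lemma foldr_cancel: "x \<in> M \<Longrightarrow> foldr f (w @ iw w) x = x"
proof (induction w arbitrary: x)
  case Nil then show ?case by (simp add: iw_def)
next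
  case (Cons a w)
  have "foldr f ((a # w) @ iw (a # w)) x = f a (foldr f (w @ iw w) (f (ilet a) x))"
    by (simp add: iw_Cons)
  also have "\<dots> = f a (f (ilet a) x)" using Cons closed by simp
  also have "\<dots> = x" using inv[of x "ilet a"] Cons by simp
  finally show ?case .
qed

lemma foldr_cancel2: "x \<in> M \<Longrightarrow> foldr f (iw w @ w) x = x"
  using foldr_cancel[of x "iw w"] by simp
end

interpretation crfam: invfam cr "{r. reduced r}"
proof
  fix a and x assume "x \<in> {r. reduced r}"
  then show "cr a x \<in> {r. reduced r}" by (simp add: reduced_cr)
  show "cr (ilet a) (cr a x) = x" using cr_cancel_any[of x "ilet a"] \<open>x \<in> _\<close> by simp
qed

lemma red_red_left: "red (red u @ v) = red (u @ v)"
  by (simp add: red_append crfam.foldr_red reduced_red)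

lemma red_red_right: "red (u @ red v) = red (u @ v)"
  by (simp add: red_append reduced_red red_reduced)

lemma red_cancel_mid: "red (x @ w @ iw w @ y) = red (x @ y)"
proof -
  have "red (w @ iw w @ y) = red y"
    using crfam.foldr_cancel[of "red y" w] by (simp add: red_append reduced_red)
  then show ?thesis
    by (metis red_red_right)
qed

lemma red_cancel_mid2: "red (x @ iw w @ w @ y) = red (x @ y)"
  using red_cancel_mid[of x "iw w" y] by simp

lemma reduced_nth: "reduced w \<longleftrightarrow> (\<forall>j. Suc j < length w \<longrightarrow> w ! Suc j \<noteq> ilet (w ! j))"
proof (induction w)
  case Nil then show ?case by simp
next
  case (Cons x w)
  show ?case
  proof
    assume r: "reduced (x # w)"
    show "\<forall>j. Suc j < length (x # w) \<longrightarrow> (x # w) ! Suc j \<noteq> ilet ((x # w) ! j)"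
    proof (intro allI impI)
      fix j assume j: "Suc j < length (x # w)"
      show "(x # w) ! Suc j \<noteq> ilet ((x # w) ! j)"
      proof (cases j)
        case 0 then show ?thesis using r j by (cases w) (auto simp: reduced_Cons_iff)
      next
        case (Suc k) then show ?thesis using r j Cons.IH by (simp add: reduced_Cons_iff)
      qed
    qed
  next
    assume h: "\<forall>j. Suc j < length (x # w) \<longrightarrow> (x # w) ! Suc j \<noteq> ilet ((x # w) ! j)"
    then have "reduced w" using Cons.IH by force
    moreover have "w = [] \<or> hd w \<noteq> ilet x" using h[rule_format, of 0] by (cases w) auto
    ultimately show "reduced (x # w)" by (simp add: reduced_Cons_iff)
  qed
qed

lemma nth_iw: "j < length w \<Longrightarrow> iw w ! j = ilet (w ! (length w - Suc j))"
  by (simp add: iw_def rev_nth)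

lemma reduced_iw: "reduced w \<Longrightarrow> reduced (iw w)"
  unfolding reduced_nth
proof (intro allI impI)
  fix j assume r: "\<forall>j. Suc j < length w \<longrightarrow> w ! Suc j \<noteq> ilet (w ! j)" and j: "Suc j < length (iw w)"
  define k where "k = length w - Suc (Suc j)"
  have k: "Suc k < length w" "length w - Suc j = Suc k" "length w - Suc (Suc j) = k" using j by (auto simp: k_def)
  have "w ! Suc k \<noteq> ilet (w ! k)" using r k by auto
  then show "iw w ! Suc j \<noteq> ilet (iw w ! j)" using j k
    by (auto simp: nth_iw)
qed

lemma reduced_take: "reduced w \<Longrightarrow> reduced (take n w)"
  by (auto simp: reduced_nth)

lemma reduced_append_left: "reduced (u @ v) \<Longrightarrow> reduced u"
  using reduced_take[of "u @ v" "length u"] by simp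

lemma fg_carrier: "w \<in> carrier (free_group S) \<longleftrightarrow> fst ` set w \<subseteq> S \<and> reduced w"
  by (simp add: free_group_def)

lemma fg_mult: "mult (free_group S) u v = red (u @ v)"
  by (simp add: free_group_def)

lemma fg_one: "one (free_group S) = []"
  by (simp add: free_group_def)

lemma red_w_iw: "red (w @ iw w) = []"
  using red_cancel_mid[of "[]" w "[]"] by simp

lemma red_iw_w: "red (iw w @ w) = []"
  using red_cancel_mid2[of "[]" w "[]"] by simp

lemma fg_inv: assumes g: "g \<in> carrier (free_group S)"
  shows "m_inv (free_group S) g = iw g"
  unfolding m_inv_def
proof (rule the_equality)
  show "iw g \<in> carrier (free_group S) \<and> g \<otimes>\<^bsub>free_group S\<^esub> iw g = \<one>\<^bsub>free_group S\<^esub> \<and> iw g \<otimes>\<^bsub>free_group S\<^esub> g = \<one>\<^bsub>free_group S\<^esub>"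
    using g by (simp add: fg_carrier fg_mult fg_one set_iw_fst reduced_iw red_w_iw red_iw_w)
next
  fix y assume y: "y \<in> carrier (free_group S) \<and> g \<otimes>\<^bsub>free_group S\<^esub> y = \<one>\<^bsub>free_group S\<^esub> \<and> y \<otimes>\<^bsub>free_group S\<^esub> g = \<one>\<^bsub>free_group S\<^esub>"
  then have yr: "reduced y" and gy: "red (g @ y) = []" by (auto simp: fg_carrier fg_mult fg_one)
  have "y = red y" using yr by (simp add: red_reduced)
  also have "\<dots> = red (iw g @ g @ y)" using red_cancel_mid2[of "[]" g y] by simp
  also have "\<dots> = red (iw g @ red (g @ y))" by (simp add: red_red_right)
  also have "\<dots> = iw g" using gy g by (simp add: red_reduced reduced_iw fg_carrier)
  finally show "y = iw g" .
qed

section \<open>Letter indices, streams, prefix codes\<close>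

definition iv :: "nat \<Rightarrow> nat" where "iv i = (if even i then Suc i else i - 1)"

lemma iv_iv[simp]: "iv (iv i) = i" by (auto simp: iv_def)
lemma iv_neq: "iv i \<noteq> i" by (cases "even i") (auto simp: iv_def elim: oddE)
lemma iv_less: "even K \<Longrightarrow> i < K \<Longrightarrow> iv i < K"
  by (auto simp: iv_def) (metis Suc_lessI even_Suc odd_pos)
lemma iv_inj: "iv i = iv j \<longleftrightarrow> i = j" by (metis iv_iv)

definition pre :: "'b list \<Rightarrow> (nat \<Rightarrow> 'b) \<Rightarrow> nat \<Rightarrow> 'b" where
  "pre xs y n = (if n < length xs then xs ! n else y (n - length xs))"

definition sh :: "nat \<Rightarrow> (nat \<Rightarrow> 'b) \<Rightarrow> nat \<Rightarrow> 'b" where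
  "sh d y n = y (n + d)"

lemma pre_append: "pre (xs @ ys) y = pre xs (pre ys y)"
  by (auto simp: pre_def fun_eq_iff nth_append)

lemma sh_pre: "sh (length xs) (pre xs y) = y"
  by (auto simp: pre_def sh_def fun_eq_iff)

lemma pre_Nil[simp]: "pre [] y = y" by (simp add: pre_def fun_eq_iff)
lemma sh_0[simp]: "sh 0 y = y" by (simp add: sh_def fun_eq_iff)
lemma sh_sh: "sh a (sh b y) = sh (a + b) y" by (simp add: sh_def fun_eq_iff ac_simps)

definition code :: "nat \<Rightarrow> nat \<Rightarrow> bool list" where
  "code k c = replicate c True @ (if Suc c < k then [False] else [])"

definition rd :: "nat \<Rightarrow> (nat \<Rightarrow> bool) \<Rightarrow> nat" where
  "rd k y = (LEAST j. Suc j = k \<or> \<not> y j)"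

definition ln :: "nat \<Rightarrow> (nat \<Rightarrow> bool) \<Rightarrow> nat" where
  "ln k y = length (code k (rd k y))"

lemma rd_le: assumes "1 \<le> k" shows "rd k y < k"
proof -
  have "rd k y \<le> k - 1" unfolding rd_def by (rule Least_le) (use assms in auto)
  then show ?thesis using assms by simp
qed

lemma rd_code: assumes "c < k" shows "rd k (pre (code k c) y) = c"
  unfolding rd_def
proof (rule Least_equality)
  show "Suc c = k \<or> \<not> pre (code k c) y c"
    using assms by (auto simp: pre_def code_def nth_append)
next
  fix j assume "Suc j = k \<or> \<not> pre (code k c) y j"
  then show "c \<le> j" using assms
    by (cases "j < c") (auto simp: pre_def code_def nth_append)
qed

lemma ln_code: "c < k \<Longrightarrow> ln k (pre (code k c) y) = length (code k c)"
  by (simp add: ln_def rd_code)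

lemma length_code: "length (code k c) = (if Suc c < k then Suc c else c)"
  by (simp add: code_def)

lemma ln_le: "1 \<le> k \<Longrightarrow> ln k y \<le> k - 1"
  using rd_le[of k y] by (auto simp: ln_def length_code)

lemma ln_pos: "2 \<le> k \<Longrightarrow> 1 \<le> ln k y"
  using rd_le[of k y] by (auto simp: ln_def length_code)

lemma pre_code_rd: assumes k: "1 \<le> k" shows "pre (code k (rd k y)) (sh (ln k y) y) = y"
proof -
  let ?c = "rd k y"
  have lt: "\<And>i. i < ?c \<Longrightarrow> y i"
  proof -
    fix i assume "i < ?c"
    from not_less_Least[OF this[unfolded rd_def]] have "\<not> (Suc i = k \<or> \<not> y i)" .
    then show "y i" by simp
  qed
  have at: "Suc ?c = k \<or> \<not> y ?c"
    unfolding rd_def by (rule LeastI[of _ "k - 1"]) (use k in auto)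
  show ?thesis
  proof (rule ext)
    fix n
    show "pre (code k ?c) (sh (ln k y) y) n = y n"
    proof (cases "n < length (code k ?c)")
      case True
      then consider "n < ?c" | "n = ?c" "Suc ?c < k" by (auto simp: length_code less_Suc_eq split: if_splits)
      then show ?thesis
      proof cases
        case 1 then show ?thesis using lt by (auto simp: pre_def code_def nth_append)
      next
        case 2 then show ?thesis using at by (auto simp: pre_def code_def nth_append)
      qed
    next
      case False
      then show ?thesis by (simp add: pre_def sh_def ln_def)
    qed
  qed
qed

lemma rd_agree: assumes k: "1 \<le> k" and ag: "\<And>j. j < k - 1 \<Longrightarrow> y j = y' j" shows "rd k y = rd k y'"
proof -
  let ?P = "\<lambda>j. Suc j = k \<or> \<not> y j" and ?Q = "\<lambda>j. Suc j = k \<or> \<not> y' j"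
  have eq: "\<And>j. j \<le> k - 1 \<Longrightarrow> ?P j = ?Q j"
  proof -
    fix j assume "j \<le> k - 1"
    then consider "j < k - 1" | "j = k - 1" by linarith
    then show "?P j = ?Q j" by cases (use ag k in auto)
  qed
  have q: "?Q (Least ?Q)" by (rule LeastI[of _ "k - 1"]) (use k in auto)
  have ql: "Least ?Q \<le> k - 1" by (rule Least_le) (use k in auto)
  have "Least ?P = Least ?Q"
  proof (rule Least_equality)
    show "?P (Least ?Q)" using eq[OF ql] q by blast
  next
    fix j assume pj: "?P j"
    show "Least ?Q \<le> j"
    proof (cases "j \<le> k - 1")
      case True then show ?thesis using eq[OF True] pj by (intro Least_le) blast
    next
      case False then show ?thesis using ql by linarith
    qed
  qed
  then show ?thesis by (simp add: rd_def)
qed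

definition rho :: "nat \<Rightarrow> nat \<Rightarrow> nat" where "rho f c = (if c < iv f then c else Suc c)"
definition rhoinv :: "nat \<Rightarrow> nat \<Rightarrow> nat" where "rhoinv a f = (if f < iv a then f else f - 1)"

lemma rho_neq: "rho f c \<noteq> iv f" by (auto simp: rho_def)
lemma rho_less: "even K \<Longrightarrow> f < K \<Longrightarrow> c < K - 1 \<Longrightarrow> rho f c < K"
  by (auto simp: rho_def)
lemma rhoinv_less: "even K \<Longrightarrow> a < K \<Longrightarrow> f < K \<Longrightarrow> f \<noteq> iv a \<Longrightarrow> rhoinv a f < K - 1"
  using iv_less[of K a] by (auto simp: rhoinv_def)
lemma rho_rhoinv: "f \<noteq> iv a \<Longrightarrow> rho a (rhoinv a f) = f"
  by (auto simp: rho_def rhoinv_def)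
lemma rhoinv_rho: "rhoinv f (rho f c) = c"
  by (auto simp: rho_def rhoinv_def)

section \<open>The boundary step\<close>

definition stepB :: "nat \<Rightarrow> nat \<Rightarrow> (nat \<Rightarrow> bool) \<Rightarrow> (nat \<Rightarrow> bool)" where
  "stepB K a B = (let f = rd K B; B1 = sh (ln K B) B in
     if f = iv a then pre (code K (rho f (rd (K - 1) B1))) (sh (ln (K - 1) B1) B1)
     else pre (code K a @ code (K - 1) (rhoinv a f)) B1)"

definition add1 :: "(nat \<Rightarrow> bool) \<Rightarrow> nat \<Rightarrow> bool" where
  "add1 z n = (z n \<noteq> (\<forall>i<n. z i))"
definition sub1 :: "(nat \<Rightarrow> bool) \<Rightarrow> nat \<Rightarrow> bool" where
  "sub1 z n = (z n \<noteq> (\<forall>i<n. \<not> z i))"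

definition stepZ :: "nat \<Rightarrow> nat \<Rightarrow> (nat \<Rightarrow> bool) \<Rightarrow> (nat \<Rightarrow> bool) \<Rightarrow> (nat \<Rightarrow> bool)" where
  "stepZ K a B Z = (if rd K B = iv a then sub1 Z else add1 Z)"

definition fstep :: "nat \<Rightarrow> nat \<Rightarrow> (nat \<Rightarrow> bool) \<times> (nat \<Rightarrow> bool) \<Rightarrow> (nat \<Rightarrow> bool) \<times> (nat \<Rightarrow> bool)" where
  "fstep K a p = (stepB K a (fst p), stepZ K a (fst p) (snd p))"

locale kk =
  fixes K :: nat
  assumes evK: "even K" and K4: "4 \<le> K"
begin

lemma K1: "1 \<le> K - 1" using K4 by simp

lemma rd_stepB: assumes a: "a < K"
  shows "rd K (stepB K a B) = (if rd K B = iv a then rho (rd K B) (rd (K - 1) (sh (ln K B) B)) else a)"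
proof -
  have fK: "rd K B < K" using rd_le K4 by simp
  have cK: "rd (K - 1) (sh (ln K B) B) < K - 1" using rd_le K1 by simp
  show ?thesis
    using rho_less[OF evK fK cK] a
    by (auto simp: stepB_def Let_def rd_code pre_append)
qed

lemma stepB_inv: assumes a: "a < K" shows "stepB K (iv a) (stepB K a B) = B"
proof -
  define f where "f = rd K B"
  define B1 where "B1 = sh (ln K B) B"
  have fK: "f < K" using rd_le K4 by (simp add: f_def)
  have B: "B = pre (code K f) B1" using pre_code_rd[of K B] K4 by (simp add: f_def B1_def)
  show ?thesis
  proof (cases "f = iv a")
    case True
    define c1 where "c1 = rd (K - 1) B1"
    define B2 where "B2 = sh (ln (K - 1) B1) B1"
    have c1K: "c1 < K - 1" using rd_le K1 by (simp add: c1_def)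
    define b where "b = rho f c1"
    have bK: "b < K" using rho_less[OF evK fK c1K] by (simp add: b_def)
    have B1e: "B1 = pre (code (K - 1) c1) B2" using pre_code_rd[of "K - 1" B1] K1 by (simp add: c1_def B2_def)
    have s: "stepB K a B = pre (code K b) B2"
      unfolding stepB_def Let_def using True by (simp add: f_def B1_def c1_def B2_def b_def)
    have bne: "b \<noteq> iv (iv a)" using rho_neq[of f c1] True by (simp add: b_def)
    have "stepB K (iv a) (pre (code K b) B2) = pre (code K (iv a) @ code (K - 1) (rhoinv (iv a) b)) B2"
      using bne bK by (simp add: stepB_def Let_def rd_code ln_code sh_pre)
    also have "\<dots> = B" using True B B1e by (simp add: pre_append b_def rhoinv_rho)
    finally show ?thesis using s by simp
  next
    case False
    define r where "r = rhoinv a f"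
    have rK: "r < K - 1" using rhoinv_less[OF evK a fK False] by (simp add: r_def)
    have s: "stepB K a B = pre (code K a) (pre (code (K - 1) r) B1)"
      using False by (simp add: stepB_def Let_def f_def[symmetric] B1_def[symmetric] r_def pre_append)
    have "stepB K (iv a) (pre (code K a) (pre (code (K - 1) r) B1)) = pre (code K (rho a r)) B1"
      using a rK by (simp add: stepB_def Let_def rd_code ln_code sh_pre)
    also have "\<dots> = B" using B False by (simp add: r_def rho_rhoinv)
    finally show ?thesis using s by simp
  qed
qed

end

lemma add1_all: "(\<forall>i<n. \<not> add1 z i) \<longleftrightarrow> (\<forall>i<n. z i)"
proof (induction n)
  case 0 then show ?case by simp
next
  case (Suc n)
  have "(\<forall>i<Suc n. \<not> add1 z i) \<longleftrightarrow> (\<forall>i<n. \<not> add1 z i) \<and> \<not> add1 z n" by (auto simp: less_Suc_eq)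
  moreover have "\<not> add1 z n \<longleftrightarrow> (z n = (\<forall>i<n. z i))" by (simp only: add1_def) blast
  ultimately have "(\<forall>i<Suc n. \<not> add1 z i) \<longleftrightarrow> (\<forall>i<n. z i) \<and> z n" using Suc.IH by blast
  then show ?case by (auto simp: less_Suc_eq)
qed

lemma sub1_all: "(\<forall>i<n. sub1 z i) \<longleftrightarrow> (\<forall>i<n. \<not> z i)"
proof (induction n)
  case 0 then show ?case by simp
next
  case (Suc n)
  have "(\<forall>i<Suc n. sub1 z i) \<longleftrightarrow> (\<forall>i<n. sub1 z i) \<and> sub1 z n" by (auto simp: less_Suc_eq)
  moreover have "sub1 z n \<longleftrightarrow> (z n \<noteq> (\<forall>i<n. \<not> z i))" by (simp only: sub1_def)
  ultimately have "(\<forall>i<Suc n. sub1 z i) \<longleftrightarrow> (\<forall>i<n. \<not> z i) \<and> \<not> z n" using Suc.IH by blast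
  then show ?case by (auto simp: less_Suc_eq)
qed

lemma sub1_add1[simp]: "sub1 (add1 z) = z"
proof (rule ext)
  fix n
  have h: "(\<forall>i<n. \<not> add1 z i) = (\<forall>i<n. z i)" by (rule add1_all)
  have "sub1 (add1 z) n = (add1 z n \<noteq> (\<forall>i<n. z i))" by (simp only: sub1_def h)
  also have "\<dots> = z n" by (simp only: add1_def) blast
  finally show "sub1 (add1 z) n = z n" .
qed

lemma add1_sub1[simp]: "add1 (sub1 z) = z"
proof (rule ext)
  fix n
  have h: "(\<forall>i<n. sub1 z i) = (\<forall>i<n. \<not> z i)" by (rule sub1_all)
  have "add1 (sub1 z) n = (sub1 z n \<noteq> (\<forall>i<n. \<not> z i))" by (simp only: add1_def h)
  also have "\<dots> = z n" by (simp only: sub1_def) blast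
  finally show "add1 (sub1 z) n = z n" .
qed

context kk begin

lemma stepZ_inv: assumes a: "a < K"
  shows "stepZ K (iv a) (stepB K a B) (stepZ K a B Z) = Z"
proof -
  have fK: "rd K B < K" using rd_le K4 by simp
  have cK: "rd (K - 1) (sh (ln K B) B) < K - 1" using rd_le K1 by simp
  show ?thesis
    using rho_neq[of "rd K B" "rd (K - 1) (sh (ln K B) B)"]
    by (auto simp: stepZ_def rd_stepB[OF a])
qed

lemma fstep_inv: "a < K \<Longrightarrow> fstep K (iv a) (fstep K a p) = p"
  by (simp add: fstep_def stepB_inv stepZ_inv)

end

fun decr :: "nat \<Rightarrow> nat \<Rightarrow> (nat \<Rightarrow> bool) \<Rightarrow> nat \<Rightarrow> nat" where
  "decr K f y 0 = rho f (rd (K - 1) y)"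
| "decr K f y (Suc n) = decr K (rho f (rd (K - 1) y)) (sh (ln (K - 1) y) y) n"

definition dec :: "nat \<Rightarrow> (nat \<Rightarrow> bool) \<Rightarrow> nat \<Rightarrow> nat" where
  "dec K B n = (case n of 0 \<Rightarrow> rd K B | Suc m \<Rightarrow> decr K (rd K B) (sh (ln K B) B) m)"

definition wst :: "nat \<Rightarrow> (nat \<Rightarrow> nat) \<Rightarrow> nat \<Rightarrow> nat" where
  "wst a \<xi> = (if \<xi> 0 = iv a then sh 1 \<xi> else pre [a] \<xi>)"

lemma dec_0: "dec K B 0 = rd K B" by (simp add: dec_def)
lemma dec_Suc: "dec K B (Suc m) = decr K (rd K B) (sh (ln K B) B) m" by (simp add: dec_def)

context kk begin

lemma dec_stepB: assumes a: "a < K" shows "dec K (stepB K a B) = wst a (dec K B)"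
proof -
  define f where "f = rd K B"
  define B1 where "B1 = sh (ln K B) B"
  have fK: "f < K" using rd_le K4 by (simp add: f_def)
  show ?thesis
  proof (cases "f = iv a")
    case True
    have c1K: "rd (K - 1) B1 < K - 1" using rd_le K1 by simp
    have bK: "rho f (rd (K - 1) B1) < K" using rho_less[OF evK fK c1K] .
    have s: "stepB K a B = pre (code K (rho f (rd (K - 1) B1))) (sh (ln (K - 1) B1) B1)"
      unfolding stepB_def Let_def using True by (simp add: f_def B1_def)
    have w: "wst a (dec K B) = sh 1 (dec K B)" using True by (simp add: wst_def dec_0 f_def)
    show ?thesis
    proof (rule ext)
      fix n
      show "dec K (stepB K a B) n = wst a (dec K B) n"
        unfolding s w using bK
        by (cases n) (simp_all add: dec_0 dec_Suc rd_code ln_code sh_pre sh_def f_def[symmetric] B1_def[symmetric])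
    qed
  next
    case False
    define r where "r = rhoinv a f"
    have rK: "r < K - 1" using rhoinv_less[OF evK a fK False] by (simp add: r_def)
    have s: "stepB K a B = pre (code K a) (pre (code (K - 1) r) B1)"
      unfolding stepB_def Let_def using False by (simp add: f_def B1_def r_def pre_append)
    have w: "wst a (dec K B) = pre [a] (dec K B)" using False by (simp add: wst_def dec_0 f_def)
    have rr: "rho a r = f" using False by (simp add: r_def rho_rhoinv)
    show ?thesis
    proof (rule ext)
      fix n
      show "dec K (stepB K a B) n = wst a (dec K B) n"
      proof (cases n)
        case 0 then show ?thesis unfolding s w using a by (simp add: dec_0 rd_code pre_def)
      next
        case (Suc m)
        then show ?thesis unfolding s w
          using a rK rr by (cases m) (simp_all add: dec_0 dec_Suc rd_code ln_code sh_pre pre_def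
            f_def[symmetric] B1_def[symmetric])
      qed
    qed
  qed
qed

lemma decr_less: "f < K \<Longrightarrow> decr K f y n < K"
proof (induction n arbitrary: f y)
  case 0 then show ?case using rho_less[OF evK, of f "rd (K - 1) y"] rd_le[OF K1, of y] by simp
next
  case (Suc n) then show ?case using rho_less[OF evK, of f "rd (K - 1) y"] rd_le[OF K1, of y] by simp
qed

lemma dec_less: "dec K B n < K"
  using rd_le[of K B] K4 decr_less[of "rd K B"] by (cases n) (auto simp: dec_0 dec_Suc)

lemma decr_red0: "decr K f y 0 \<noteq> iv f"
  by (simp add: rho_neq)

lemma decr_red: "decr K f y (Suc n) \<noteq> iv (decr K f y n)"
proof (induction n arbitrary: f y)
  case 0 then show ?case by (simp add: rho_neq)
next
  case (Suc n) then show ?case by simp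
qed

lemma dec_red: "dec K B (Suc n) \<noteq> iv (dec K B n)"
  by (cases n) (simp_all add: dec_0 dec_Suc decr_red rho_neq del: decr.simps, simp add: rho_neq)

end

section \<open>Odometer values\<close>

definition val :: "nat \<Rightarrow> (nat \<Rightarrow> bool) \<Rightarrow> nat" where
  "val k z = (\<Sum>i<k. if z i then 2^i else 0)"

lemma val_Suc: "val (Suc k) z = val k z + (if z k then 2^k else 0)"
  by (simp add: val_def)

lemma val_less: "val k z < 2^k"
proof (induction k)
  case 0 then show ?case by (simp add: val_def)
next
  case (Suc k) then show ?case by (simp add: val_Suc)
qed

lemma val_all: "(\<forall>i<k. z i) \<Longrightarrow> val k z = 2^k - 1"
proof (induction k)
  case 0 then show ?case by (simp add: val_def)
next
  case (Suc k)
  then have "val k z = 2^k - 1" "z k" by auto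
  then show ?case by (simp add: val_Suc)
qed

lemma val_notall: "\<not> (\<forall>i<k. z i) \<Longrightarrow> val k z + 1 < 2^k"
proof (induction k)
  case 0 then show ?case by simp
next
  case (Suc k)
  show ?case
  proof (cases "\<forall>i<k. z i")
    case True
    then have "\<not> z k" using Suc.prems by (auto simp: less_Suc_eq)
    then show ?thesis using val_all[OF True] by (simp add: val_Suc)
  next
    case False
    then have "val k z + 1 < 2^k" using Suc.IH by simp
    then show ?thesis by (simp add: val_Suc)
  qed
qed

lemma val_add1: "val k (add1 z) = (val k z + 1) mod 2^k"
proof (induction k)
  case 0 then show ?case by (simp add: val_def)
next
  case (Suc k)
  show ?case
  proof (cases "\<forall>i<k. z i")
    case True
    have v: "val k z = 2^k - 1" using val_all[OF True] .
    have a: "add1 z k = (\<not> z k)" using True by (simp add: add1_def)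
    have "val (Suc k) (add1 z) = (if z k then 0 else 2^k)"
      using Suc.IH v a by (simp add: val_Suc)
    moreover have "(val (Suc k) z + 1) mod 2^Suc k = (if z k then 0 else 2^k)"
      using v by (simp add: val_Suc mult_2[symmetric])
    ultimately show ?thesis by simp
  next
    case False
    have v: "val k z + 1 < 2^k" using val_notall[OF False] .
    have a: "add1 z k = z k" using False by (simp add: add1_def)
    have "val (Suc k) (add1 z) = val k z + 1 + (if z k then 2^k else 0)"
      using Suc.IH v a by (simp add: val_Suc)
    moreover have "val k z + 1 + (if z k then 2^k else 0) < 2^Suc k" using v by auto
    ultimately show ?thesis by (simp add: val_Suc)
  qed
qed

lemma ival_add1: "int (val k (add1 z)) = (int (val k z) + 1) mod 2^k"
  by (simp add: val_add1 zmod_int add.commute)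

lemma ival_sub1: "int (val k (sub1 z)) = (int (val k z) - 1) mod 2^k"
proof -
  have "int (val k z) = (int (val k (sub1 z)) + 1) mod 2^k"
    using ival_add1[of k "sub1 z"] by simp
  then have "(int (val k z) - 1) mod 2^k = (int (val k (sub1 z)) + 1 - 1) mod 2^k"
    by (simp add: mod_diff_left_eq)
  also have "\<dots> = int (val k (sub1 z))"
    using val_less[of k "sub1 z"] by (simp add: zmod_int)
  finally show ?thesis by simp
qed

definition ired :: "nat list \<Rightarrow> bool" where
  "ired g \<longleftrightarrow> (\<forall>j. Suc j < length g \<longrightarrow> g ! Suc j \<noteq> iv (g ! j))"

lemma ired_Cons: "ired (a # g) \<longleftrightarrow> ired g \<and> (g = [] \<or> g ! 0 \<noteq> iv a)"
proof
  assume h: "ired (a # g)"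
  then have "ired g" unfolding ired_def
  proof (intro allI impI)
    fix j assume "\<forall>j. Suc j < length (a # g) \<longrightarrow> (a # g) ! Suc j \<noteq> iv ((a # g) ! j)" "Suc j < length g"
    then show "g ! Suc j \<noteq> iv (g ! j)" by (metis Suc_less_eq length_Cons nth_Cons_Suc)
  qed
  moreover have "g = [] \<or> g ! 0 \<noteq> iv a"
  proof (cases g)
    case (Cons b g') then show ?thesis using h unfolding ired_def by (metis Suc_less_eq length_Cons nth_Cons_0 nth_Cons_Suc zero_less_Suc)
  qed simp
  ultimately show "ired g \<and> (g = [] \<or> g ! 0 \<noteq> iv a)" ..
next
  assume h: "ired g \<and> (g = [] \<or> g ! 0 \<noteq> iv a)"
  show "ired (a # g)" unfolding ired_def
  proof (intro allI impI)
    fix j assume j: "Suc j < length (a # g)"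
    show "(a # g) ! Suc j \<noteq> iv ((a # g) ! j)"
    proof (cases j)
      case 0 then show ?thesis using h j by auto
    next
      case (Suc i) then show ?thesis using h j by (auto simp: ired_def)
    qed
  qed
qed

context kk begin

lemma closed_form:
  assumes "\<forall>a\<in>set g. a < K" and "ired g"
  shows "\<exists>g1 g2. g = g1 @ g2 \<and>
     (\<forall>i<length g2. dec K (fst p) i = iv (g2 ! (length g2 - Suc i))) \<and>
     dec K (fst (foldr (fstep K) g p)) = pre g1 (sh (length g2) (dec K (fst p))) \<and>
     (\<forall>k. int (val k (snd (foldr (fstep K) g p))) =
          (int (val k (snd p)) + int (length g1) - int (length g2)) mod 2^k)"
  using assms
proof (induction g)
  case Nil
  show ?case
    by (rule exI[of _ "[]"], rule exI[of _ "[]"]) (simp add: val_less zmod_int)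
next
  case (Cons a g)
  have aK: "a < K" and gK: "\<forall>a\<in>set g. a < K" using Cons.prems by auto
  have ig: "ired g" and ia: "g = [] \<or> g ! 0 \<noteq> iv a" using Cons.prems(2) by (auto simp: ired_Cons)
  obtain g1 g2 where g: "g = g1 @ g2"
    and pref: "\<forall>i<length g2. dec K (fst p) i = iv (g2 ! (length g2 - Suc i))"
    and dq: "dec K (fst (foldr (fstep K) g p)) = pre g1 (sh (length g2) (dec K (fst p)))"
    and zq: "\<forall>k. int (val k (snd (foldr (fstep K) g p))) =
          (int (val k (snd p)) + int (length g1) - int (length g2)) mod 2^k"
    using Cons.IH[OF gK ig] by blast
  define q where "q = foldr (fstep K) g p"
  define \<xi> where "\<xi> = dec K (fst p)"
  define c where "c = length g2"
  have fq: "foldr (fstep K) (a # g) p = fstep K a q" by (simp add: q_def)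
  have dnew: "dec K (fst (fstep K a q)) = wst a (dec K (fst q))"
    by (simp add: fstep_def dec_stepB[OF aK])
  have rq: "rd K (fst q) = dec K (fst q) 0" by (simp add: dec_0)
  have znew: "snd (fstep K a q) = (if dec K (fst q) 0 = iv a then sub1 (snd q) else add1 (snd q))"
    by (simp add: fstep_def stepZ_def rq)
  have dq': "dec K (fst q) = pre g1 (sh c \<xi>)" using dq by (simp add: q_def \<xi>_def c_def)
  have zq': "\<And>k. int (val k (snd q)) = (int (val k (snd p)) + int (length g1) - int c) mod 2^k"
    using zq by (simp add: q_def c_def)
  show ?case
  proof (cases "g1 = []")
    case False
    have h0: "dec K (fst q) 0 = g1 ! 0" using False dq' by (simp add: pre_def)
    have "g ! 0 = g1 ! 0" using False g by (simp add: nth_append)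
    then have ne: "dec K (fst q) 0 \<noteq> iv a" using ia h0 g False by auto
    show ?thesis
    proof (intro exI conjI)
      show "a # g = (a # g1) @ g2" using g by simp
      show "\<forall>i<length g2. dec K (fst p) i = iv (g2 ! (length g2 - Suc i))" by (rule pref)
      show "dec K (fst (foldr (fstep K) (a # g) p)) = pre (a # g1) (sh (length g2) (dec K (fst p)))"
        using ne unfolding fq dnew wst_def by (simp add: dq' \<xi>_def c_def pre_append[symmetric])
      show "\<forall>k. int (val k (snd (foldr (fstep K) (a # g) p))) =
          (int (val k (snd p)) + int (length (a # g1)) - int (length g2)) mod 2^k"
        using ne unfolding fq znew by (simp add: ival_add1 zq' c_def mod_simps algebra_simps)
    qed
  next
    case True
    have dq2: "dec K (fst q) = sh c \<xi>" using dq' True by simp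
    show ?thesis
    proof (cases "\<xi> c = iv a")
      case eq: True
      have h0: "dec K (fst q) 0 = iv a" using dq2 eq by (simp add: sh_def)
      show ?thesis
      proof (intro exI conjI)
        show "a # g = [] @ (a # g2)" using g True by simp
        show "\<forall>i<length (a # g2). dec K (fst p) i = iv ((a # g2) ! (length (a # g2) - Suc i))"
        proof (intro allI impI)
          fix i assume i: "i < length (a # g2)"
          show "dec K (fst p) i = iv ((a # g2) ! (length (a # g2) - Suc i))"
          proof (cases "i < c")
            case True
            then have "length (a # g2) - Suc i = Suc (length g2 - Suc i)" by (simp add: c_def)
            then show ?thesis using pref True by (simp add: c_def)
          next
            case False
            then have "i = c" using i by (simp add: c_def)
            then show ?thesis using eq by (simp add: \<xi>_def c_def)
          qed
        qed
        show "dec K (fst (foldr (fstep K) (a # g) p)) = pre [] (sh (length (a # g2)) (dec K (fst p)))"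
          using h0 unfolding fq dnew wst_def by (simp add: dq2 sh_sh \<xi>_def c_def)
        show "\<forall>k. int (val k (snd (foldr (fstep K) (a # g) p))) =
          (int (val k (snd p)) + int (length ([]::nat list)) - int (length (a # g2))) mod 2^k"
          using h0 True unfolding fq znew by (simp add: ival_sub1 zq' c_def mod_simps algebra_simps)
      qed
    next
      case ne: False
      have h0: "dec K (fst q) 0 \<noteq> iv a" using dq2 ne by (simp add: sh_def)
      show ?thesis
      proof (intro exI conjI)
        show "a # g = [a] @ g2" using g True by simp
        show "\<forall>i<length g2. dec K (fst p) i = iv (g2 ! (length g2 - Suc i))" by (rule pref)
        show "dec K (fst (foldr (fstep K) (a # g) p)) = pre [a] (sh (length g2) (dec K (fst p)))"
          using h0 unfolding fq dnew wst_def by (simp add: dq2 \<xi>_def c_def)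
        show "\<forall>k. int (val k (snd (foldr (fstep K) (a # g) p))) =
          (int (val k (snd p)) + int (length [a]) - int (length g2)) mod 2^k"
          using h0 True unfolding fq znew by (simp add: ival_add1 zq' c_def mod_simps algebra_simps)
      qed
    qed
  qed
qed

lemma factor_free:
  assumes gK: "\<forall>a\<in>set g. a < K" and ig: "ired g" and ne: "g \<noteq> []"
  shows "foldr (fstep K) g p \<noteq> p"
proof
  assume fx: "foldr (fstep K) g p = p"
  obtain g1 g2 where g: "g = g1 @ g2"
    and pref: "\<forall>i<length g2. dec K (fst p) i = iv (g2 ! (length g2 - Suc i))"
    and dq: "dec K (fst (foldr (fstep K) g p)) = pre g1 (sh (length g2) (dec K (fst p)))"
    and zq: "\<forall>k. int (val k (snd (foldr (fstep K) g p))) =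
          (int (val k (snd p)) + int (length g1) - int (length g2)) mod 2^k"
    using closed_form[OF gK ig] by blast
  define d where "d = int (length g1) - int (length g2)"
  define k where "k = length g"
  have "int (val k (snd p)) = (int (val k (snd p)) + int (length g1) - int (length g2)) mod 2^k"
    using zq[rule_format, of k] fx by simp
  then have m: "(int (val k (snd p)) + d) mod 2^k = int (val k (snd p)) mod 2^k"
    using val_less[of k "snd p"] by (simp add: d_def zmod_int add_diff_eq)
  then have "(2::int)^k dvd d" by (simp add: mod_eq_dvd_iff)
  moreover have "\<bar>d\<bar> < 2^k" unfolding d_def k_def g
  proof -
    have "length g1 + length g2 < (2::int)^(length g1 + length g2)"
      using less_exp[of "length g1 + length g2"] by (metis of_nat_less_iff of_nat_numeral of_nat_power)
    then show "\<bar>int (length g1) - int (length g2)\<bar> < 2 ^ length (g1 @ g2)" by simp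
  qed
  ultimately have "d = 0"
  proof -
    assume dm: "(2::int)^k dvd d" and db: "\<bar>d\<bar> < 2^k"
    then obtain t where t: "d = 2^k * t" by (auto simp: dvd_def)
    show "d = 0"
    proof (rule ccontr)
      assume "d \<noteq> 0"
      then have "t \<noteq> 0" using t by simp
      then have "\<bar>t\<bar> \<ge> 1" by simp
      then have "\<bar>d\<bar> \<ge> 2^k" using t by (simp add: abs_mult)
      then show False using db by simp
    qed
  qed
  then have len: "length g1 = length g2" by (simp add: d_def)
  define c where "c = length g2"
  have "length g = 2 * c" using g len by (simp add: c_def)
  then have c0: "0 < c" using ne by (metis gr0I length_0_conv mult_0_right)
  have "dec K (fst p) (c - 1) = g1 ! (c - 1)"
  proof -
    have "dec K (fst p) (c - 1) = pre g1 (sh (length g2) (dec K (fst p))) (c - 1)" using dq fx by simp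
    then show ?thesis using len c0 by (simp add: pre_def c_def)
  qed
  moreover have "dec K (fst p) (c - 1) = iv (g2 ! 0)"
    using pref c0 by (simp add: c_def)
  ultimately have e: "g1 ! (c - 1) = iv (g2 ! 0)" by simp
  have "Suc (c - 1) < length g" using c0 len g by (simp add: c_def)
  then have "g ! Suc (c - 1) \<noteq> iv (g ! (c - 1))" using ig unfolding ired_def by blast
  moreover have "g ! Suc (c - 1) = g2 ! 0" using c0 len g by (simp add: nth_append c_def)
  moreover have "g ! (c - 1) = g1 ! (c - 1)" using c0 len g by (simp add: nth_append c_def)
  ultimately show False using e by simp
qed

end

section \<open>Finite dependence at the factor level\<close>

lemma pre_agree: "(\<And>j. j < N \<Longrightarrow> y j = y' j) \<Longrightarrow> q < N + length xs \<Longrightarrow> pre xs y q = pre xs y' q"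
  by (simp add: pre_def)

lemma sh_agree: "(\<And>j. j < N + d \<Longrightarrow> y j = y' j) \<Longrightarrow> j < N \<Longrightarrow> sh d y j = sh d y' j"
  by (simp add: sh_def)

lemma ln_agree: "1 \<le> k \<Longrightarrow> (\<And>j. j < k - 1 \<Longrightarrow> y j = y' j) \<Longrightarrow> ln k y = ln k y'"
  unfolding ln_def by (subst rd_agree[of k y y']) auto

context kk begin

lemma stepB_dep:
  assumes ag: "\<And>j. j < q + 2 * K \<Longrightarrow> B j = B' j"
  shows "stepB K a B q = stepB K a B' q"
proof -
  have r0: "rd K B = rd K B'" by (rule rd_agree) (use K4 ag in auto)
  have l0: "ln K B = ln K B'" by (rule ln_agree) (use K4 ag in auto)
  define l where "l = ln K B"
  have lle: "l \<le> K - 1" using ln_le[of K B] K4 by (simp add: l_def)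
  define B1 where "B1 = sh l B"
  define B1' where "B1' = sh l B'"
  have a1: "\<And>j. j < q + K + 1 \<Longrightarrow> B1 j = B1' j"
    unfolding B1_def B1'_def by (rule sh_agree[where N="q + K + 1"]) (use ag lle K4 in auto)
  have r1: "rd (K - 1) B1 = rd (K - 1) B1'" by (rule rd_agree) (use K4 a1 in auto)
  have l1: "ln (K - 1) B1 = ln (K - 1) B1'" by (rule ln_agree) (use K4 a1 in auto)
  have l1le: "ln (K - 1) B1 \<le> K - 1 - 1" by (rule ln_le) (use K4 in simp)
  have e: "stepB K a B = (if rd K B = iv a then pre (code K (rho (rd K B) (rd (K - 1) B1))) (sh (ln (K - 1) B1) B1)
     else pre (code K a @ code (K - 1) (rhoinv a (rd K B))) B1)"
    by (simp add: stepB_def Let_def B1_def l_def)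
  have e': "stepB K a B' = (if rd K B = iv a then pre (code K (rho (rd K B) (rd (K - 1) B1))) (sh (ln (K - 1) B1) B1')
     else pre (code K a @ code (K - 1) (rhoinv a (rd K B))) B1')"
    unfolding stepB_def Let_def r0[symmetric] l0[symmetric] l_def[symmetric] B1'_def[symmetric] r1[symmetric] l1[symmetric]
    by simp
  show ?thesis
  proof (cases "rd K B = iv a")
    case True
    have "pre (code K (rho (rd K B) (rd (K - 1) B1))) (sh (ln (K - 1) B1) B1) q =
          pre (code K (rho (rd K B) (rd (K - 1) B1))) (sh (ln (K - 1) B1) B1') q"
    proof (rule pre_agree[where N = "q + 1"])
      fix j assume "j < q + 1"
      then show "sh (ln (K - 1) B1) B1 j = sh (ln (K - 1) B1) B1' j"
        using a1 l1le K4 by (simp add: sh_def)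
    qed simp
    then show ?thesis using True e e' by simp
  next
    case False
    have "pre (code K a @ code (K - 1) (rhoinv a (rd K B))) B1 q = pre (code K a @ code (K - 1) (rhoinv a (rd K B))) B1' q"
      by (rule pre_agree[where N = "q + 1"]) (use a1 in auto)
    then show ?thesis using False e e' by simp
  qed
qed

lemma stepZ_dep:
  assumes "\<And>j. j < K \<Longrightarrow> B j = B' j" and "\<And>j. j \<le> q \<Longrightarrow> Z j = Z' j"
  shows "stepZ K a B Z q = stepZ K a B' Z' q"
proof -
  have r0: "rd K B = rd K B'" by (rule rd_agree) (use K4 assms in auto)
  have "(\<forall>i<q. Z i) = (\<forall>i<q. Z' i)" "(\<forall>i<q. \<not> Z i) = (\<forall>i<q. \<not> Z' i)" using assms(2) by auto
  then show ?thesis using assms(2)[of q] by (simp add: stepZ_def r0 add1_def sub1_def)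
qed

lemma decr_dep: "(\<And>j. j < Suc n * K \<Longrightarrow> y j = y' j) \<Longrightarrow> decr K f y n = decr K f y' n"
proof (induction n arbitrary: f y y')
  case 0
  have "rd (K - 1) y = rd (K - 1) y'" by (rule rd_agree) (use K4 0 in auto)
  then show ?case by simp
next
  case (Suc n)
  have r: "rd (K - 1) y = rd (K - 1) y'" by (rule rd_agree) (use K4 Suc.prems in auto)
  have l: "ln (K - 1) y = ln (K - 1) y'" by (rule ln_agree) (use K4 Suc.prems in auto)
  have lle: "ln (K - 1) y \<le> K - 1 - 1" by (rule ln_le) (use K4 in simp)
  have "decr K (rho f (rd (K - 1) y)) (sh (ln (K - 1) y) y) n = decr K (rho f (rd (K - 1) y)) (sh (ln (K - 1) y) y') n"
  proof (rule Suc.IH)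
    fix j assume j: "j < Suc n * K"
    have "j + ln (K - 1) y < Suc (Suc n) * K" using j lle by simp
    then show "sh (ln (K - 1) y) y j = sh (ln (K - 1) y) y' j" using Suc.prems by (simp add: sh_def)
  qed
  then show ?case unfolding decr.simps(2) r[symmetric] l[symmetric] .
qed

lemma dec_dep: "(\<And>j. j < Suc n * K \<Longrightarrow> B j = B' j) \<Longrightarrow> dec K B n = dec K B' n"
proof (cases n)
  case 0
  assume ag: "\<And>j. j < Suc n * K \<Longrightarrow> B j = B' j"
  have "rd K B = rd K B'" by (rule rd_agree) (use K4 ag 0 in auto)
  then show ?thesis using 0 by (simp add: dec_0)
next
  case (Suc m)
  assume ag: "\<And>j. j < Suc n * K \<Longrightarrow> B j = B' j"
  have r: "rd K B = rd K B'" by (rule rd_agree) (use K4 ag in auto)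
  have l: "ln K B = ln K B'" by (rule ln_agree) (use K4 ag in auto)
  have lle: "ln K B \<le> K - 1" using ln_le[of K B] K4 by simp
  have "decr K (rd K B) (sh (ln K B) B) m = decr K (rd K B) (sh (ln K B) B') m"
  proof (rule decr_dep)
    fix j assume j: "j < Suc m * K"
    have "j + ln K B < Suc n * K" using j lle Suc K4 by simp
    then show "sh (ln K B) B j = sh (ln K B) B' j" using ag by (simp add: sh_def)
  qed
  then show ?thesis using Suc by (simp add: dec_Suc r l)
qed

end

definition fac :: "('c \<times> nat \<Rightarrow> bool) \<Rightarrow> 'c \<Rightarrow> (nat \<Rightarrow> bool) \<times> (nat \<Rightarrow> bool)" where
  "fac x L = ((\<lambda>n. x (L, 2 * n)), (\<lambda>n. x (L, Suc (2 * n))))"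

definition unfac :: "(nat \<Rightarrow> bool) \<times> (nat \<Rightarrow> bool) \<Rightarrow> nat \<Rightarrow> bool" where
  "unfac p n = (if even n then fst p (n div 2) else snd p (n div 2))"

definition idxL :: "'a list \<Rightarrow> 'a \<times> bool \<Rightarrow> nat" where
  "idxL L a = 2 * (LEAST i. L ! i = fst a) + (if snd a then 0 else 1)"

definition KL :: "'a list \<Rightarrow> nat" where "KL L = 2 * length L"

definition lett :: "'a list \<Rightarrow> nat \<Rightarrow> 'a \<times> bool" where
  "lett L i = (L ! (i div 2), even i)"

definition gstep :: "('a list \<times> nat \<times> nat \<Rightarrow> 'a) \<Rightarrow> 'a \<times> bool \<Rightarrow> ('a list \<times> nat \<Rightarrow> bool) \<Rightarrow> ('a list \<times> nat \<Rightarrow> bool)" where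
  "gstep \<delta> a x = (\<lambda>(L, n). if fst a \<in> set L \<and> 2 \<le> length L then unfac (fstep (KL L) (idxL L a) (fac x L)) n
      else if (\<exists>k. \<delta> (L, n, k) = fst a) then \<not> x (L, n) else x (L, n))"

definition gact :: "('a list \<times> nat \<times> nat \<Rightarrow> 'a) \<Rightarrow> ('a \<times> bool) list \<Rightarrow> ('a list \<times> nat \<Rightarrow> bool) \<Rightarrow> ('a list \<times> nat \<Rightarrow> bool)" where
  "gact \<delta> w = foldr (gstep \<delta>) w"

lemma gstep_apply: "gstep \<delta> a x (L, n) = (if fst a \<in> set L \<and> 2 \<le> length L then unfac (fstep (KL L) (idxL L a) (fac x L)) n
      else if (\<exists>k. \<delta> (L, n, k) = fst a) then \<not> x (L, n) else x (L, n))"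
  by (simp add: gstep_def)

lemma unfac_fac: "unfac (fac x L) n = x (L, n)"
  by (auto simp: unfac_def fac_def elim!: evenE oddE)

lemma fac_unfac: "fac (\<lambda>(L', n). if L' = L then unfac p n else y (L', n)) L = p"
  by (simp add: fac_def unfac_def)

lemma kk_KL: "2 \<le> length L \<Longrightarrow> kk (KL L)"
  by unfold_locales (auto simp: KL_def)

lemma idxL_less: "fst a \<in> set L \<Longrightarrow> idxL L a < KL L"
proof -
  assume "fst a \<in> set L"
  then obtain i where i: "i < length L" "L ! i = fst a" by (auto simp: in_set_conv_nth)
  have "(LEAST i. L ! i = fst a) \<le> i" using i by (intro Least_le) simp
  then show ?thesis using i by (auto simp: idxL_def KL_def)
qed

lemma idxL_ilet: "idxL L (ilet a) = iv (idxL L a)"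
  by (auto simp: idxL_def ilet_def iv_def)

lemma lett_idxL: "fst a \<in> set L \<Longrightarrow> lett L (idxL L a) = a"
proof -
  assume "fst a \<in> set L"
  then obtain i where i: "L ! i = fst a" by (auto simp: in_set_conv_nth)
  have "L ! (LEAST i. L ! i = fst a) = fst a" using i by (rule LeastI)
  then show ?thesis by (cases a) (auto simp: lett_def idxL_def)
qed

lemma lett_iv: "lett L (iv i) = ilet (lett L i)"
  by (auto simp: lett_def iv_def ilet_def elim!: evenE oddE)

lemma lett_inj: "distinct L \<Longrightarrow> i < KL L \<Longrightarrow> j < KL L \<Longrightarrow> lett L i = lett L j \<Longrightarrow> i = j"
proof -
  assume d: "distinct L" and i: "i < KL L" and j: "j < KL L" and e: "lett L i = lett L j"
  have "L ! (i div 2) = L ! (j div 2)" "even i = even j" using e by (auto simp: lett_def)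
  moreover have "i div 2 < length L" "j div 2 < length L" using i j by (auto simp: KL_def)
  ultimately have "i div 2 = j div 2" "even i = even j" using d nth_eq_iff_index_eq by blast+
  then show "i = j" by (metis div_mult_mod_eq mod2_eq_if)
qed

lemma lett_in: "i < KL L \<Longrightarrow> fst (lett L i) \<in> set L"
  by (auto simp: lett_def KL_def)

lemma fac_gstep:
  assumes "fst a \<in> set L" "2 \<le> length L"
  shows "fac (gstep \<delta> a x) L = fstep (KL L) (idxL L a) (fac x L)"
  using assms by (simp add: fac_def gstep_apply unfac_def)

lemma gstep_inv: "gstep \<delta> (ilet a) (gstep \<delta> a x) = x"
proof (rule ext, clarify)
  fix L n
  show "gstep \<delta> (ilet a) (gstep \<delta> a x) (L, n) = x (L, n)"
  proof (cases "fst a \<in> set L \<and> 2 \<le> length L")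
    case True
    interpret kk "KL L" using kk_KL True by blast
    have "gstep \<delta> (ilet a) (gstep \<delta> a x) (L, n) = unfac (fstep (KL L) (iv (idxL L a)) (fac (gstep \<delta> a x) L)) n"
      using True by (simp add: gstep_apply idxL_ilet)
    also have "\<dots> = unfac (fstep (KL L) (iv (idxL L a)) (fstep (KL L) (idxL L a) (fac x L))) n"
      using True by (simp add: fac_gstep)
    also have "\<dots> = x (L, n)" using fstep_inv[OF idxL_less] True by (simp add: unfac_fac)
    finally show ?thesis .
  next
    case False
    then show ?thesis by (auto simp: gstep_apply)
  qed
qed

interpretation gfam: invfam "gstep \<delta>" UNIV
  by unfold_locales (simp_all add: gstep_inv)

lemma gact_Nil[simp]: "gact \<delta> [] x = x" by (simp add: gact_def)
lemma gact_Cons: "gact \<delta> (a # w) x = gstep \<delta> a (gact \<delta> w x)" by (simp add: gact_def)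
lemma gact_append: "gact \<delta> (u @ v) x = gact \<delta> u (gact \<delta> v x)" by (simp add: gact_def)
lemma gact_red: "gact \<delta> (red w) x = gact \<delta> w x" by (simp add: gact_def gfam.foldr_red)
lemma gact_cancel: "gact \<delta> (w @ iw w) x = x" unfolding gact_def by (rule gfam.foldr_cancel) simp

lemma fac_gact:
  assumes "\<forall>a\<in>set g. fst a \<in> set L" "2 \<le> length L"
  shows "fac (gact \<delta> g x) L = foldr (fstep (KL L)) (map (idxL L) g) (fac x L)"
  using assms(1)
proof (induction g)
  case Nil then show ?case by simp
next
  case (Cons a g)
  then show ?case using assms(2) by (simp add: gact_Cons fac_gstep)
qed

lemma gstep_local:
  assumes "\<And>j. j < n + (4 * KL L + 2) \<Longrightarrow> y (L, j) = y' (L, j)"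
  shows "gstep \<delta> a y (L, n) = gstep \<delta> a y' (L, n)"
proof (cases "fst a \<in> set L \<and> 2 \<le> length L")
  case True
  interpret kk "KL L" using kk_KL True by blast
  show ?thesis
  proof (cases "even n")
    case True
    have "stepB (KL L) (idxL L a) (fst (fac y L)) (n div 2) = stepB (KL L) (idxL L a) (fst (fac y' L)) (n div 2)"
      by (rule stepB_dep) (use assms True in \<open>auto simp: fac_def elim!: evenE\<close>)
    then show ?thesis using True \<open>fst a \<in> set L \<and> 2 \<le> length L\<close>
      by (simp add: gstep_apply unfac_def fstep_def)
  next
    case False
    have "stepZ (KL L) (idxL L a) (fst (fac y L)) (snd (fac y L)) (n div 2) =
          stepZ (KL L) (idxL L a) (fst (fac y' L)) (snd (fac y' L)) (n div 2)"
      by (rule stepZ_dep) (use assms False in \<open>auto simp: fac_def elim!: oddE\<close>)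
    then show ?thesis using False \<open>fst a \<in> set L \<and> 2 \<le> length L\<close>
      by (simp add: gstep_apply unfac_def fstep_def)
  qed
next
  case False
  then show ?thesis using assms[of n] by (auto simp: gstep_apply)
qed

lemma gact_local:
  assumes "\<And>j. j < Suc n + length w * (4 * KL L + 2) \<Longrightarrow> y (L, j) = y' (L, j)"
  shows "gact \<delta> w y (L, n) = gact \<delta> w y' (L, n)"
  using assms
proof (induction w arbitrary: n)
  case Nil then show ?case by simp
next
  case (Cons a w)
  show ?case unfolding gact_Cons
  proof (rule gstep_local)
    fix j assume j: "j < n + (4 * KL L + 2)"
    show "gact \<delta> w y (L, j) = gact \<delta> w y' (L, j)"
      by (rule Cons.IH) (use Cons.prems j in auto)
  qed
qed

lemma gact_local_all:
  assumes "\<And>j. y (L, j) = y' (L, j)"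
  shows "gact \<delta> w y (L, n) = gact \<delta> w y' (L, n)"
  by (rule gact_local) (use assms in auto)

section \<open>Topology of the Cantor cube\<close>

lemma top_cantor: "topspace (cantor_top S) = PiE S (\<lambda>_. UNIV)"
  by (simp add: cantor_top_def)

lemma cyl_eq:
  assumes "D \<subseteq> S" "x \<in> topspace (cantor_top S)"
  shows "{y \<in> topspace (cantor_top S). \<forall>i\<in>D. y i = x i} = PiE S (\<lambda>i. if i \<in> D then {x i} else UNIV)"
proof (intro equalityI subsetI)
  fix y assume "y \<in> {y \<in> topspace (cantor_top S). \<forall>i\<in>D. y i = x i}"
  then show "y \<in> PiE S (\<lambda>i. if i \<in> D then {x i} else UNIV)" by (simp add: top_cantor PiE_iff)
next
  fix y assume y: "y \<in> PiE S (\<lambda>i. if i \<in> D then {x i} else UNIV)"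
  then have "\<forall>i\<in>D. y i = x i" using assms(1) unfolding PiE_iff by (metis in_mono singletonD)
  then show "y \<in> {y \<in> topspace (cantor_top S). \<forall>i\<in>D. y i = x i}" using y by (simp add: top_cantor PiE_iff)
qed

lemma cyl_open:
  assumes "finite D" "D \<subseteq> S" "x \<in> topspace (cantor_top S)"
  shows "openin (cantor_top S) {y \<in> topspace (cantor_top S). \<forall>i\<in>D. y i = x i}"
proof -
  have "finite {i \<in> S. (if i \<in> D then {x i} else UNIV) \<noteq> topspace (discrete_topology (UNIV::bool set))}"
    by (rule finite_subset[OF _ assms(1)]) auto
  then have "openin (cantor_top S) (PiE S (\<lambda>i. if i \<in> D then {x i} else UNIV))"
    unfolding cantor_top_def by (subst openin_PiE_gen) auto
  then show ?thesis using cyl_eq[OF assms(2,3)] by simp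
qed

lemma cont_fdep:
  assumes into: "\<And>y. y \<in> topspace (cantor_top S) \<Longrightarrow> F y \<in> topspace (cantor_top S)"
    and dep: "\<And>s. s \<in> S \<Longrightarrow> \<exists>D. finite D \<and> D \<subseteq> S \<and>
        (\<forall>y\<in>topspace (cantor_top S). \<forall>y'\<in>topspace (cantor_top S). (\<forall>i\<in>D. y i = y' i) \<longrightarrow> F y s = F y' s)"
  shows "continuous_map (cantor_top S) (cantor_top S) F"
  unfolding cantor_top_def
proof (subst continuous_map_componentwise, intro conjI ballI)
  show "F ` topspace (product_topology (\<lambda>_. discrete_topology UNIV) S) \<subseteq> extensional S"
    using into by (auto simp: cantor_top_def PiE_iff)
next
  fix s assume s: "s \<in> S"
  obtain D where D: "finite D" "D \<subseteq> S"
    and Dd: "\<forall>y\<in>topspace (cantor_top S). \<forall>y'\<in>topspace (cantor_top S). (\<forall>i\<in>D. y i = y' i) \<longrightarrow> F y s = F y' s"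
    using dep[OF s] by blast
  show "continuous_map (product_topology (\<lambda>_. discrete_topology UNIV) S) (discrete_topology UNIV) (\<lambda>x. F x s)"
    unfolding continuous_map
  proof (intro conjI allI impI)
    fix U :: "bool set"
    show "openin (product_topology (\<lambda>_. discrete_topology UNIV) S)
          {x \<in> topspace (product_topology (\<lambda>_. discrete_topology UNIV) S). F x s \<in> U}"
    proof (subst openin_subopen, intro ballI)
      fix x assume x: "x \<in> {x \<in> topspace (product_topology (\<lambda>_. discrete_topology UNIV) S). F x s \<in> U}"
      then have xt: "x \<in> topspace (cantor_top S)" by (simp add: cantor_top_def)
      show "\<exists>T. openin (product_topology (\<lambda>_. discrete_topology UNIV) S) T \<and> x \<in> T \<and>
             T \<subseteq> {x \<in> topspace (product_topology (\<lambda>_. discrete_topology UNIV) S). F x s \<in> U}"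
      proof (intro exI conjI)
        show "openin (product_topology (\<lambda>_. discrete_topology UNIV) S) {y \<in> topspace (cantor_top S). \<forall>i\<in>D. y i = x i}"
          using cyl_open[OF D xt] by (simp add: cantor_top_def)
        show "x \<in> {y \<in> topspace (cantor_top S). \<forall>i\<in>D. y i = x i}" using xt by simp
        show "{y \<in> topspace (cantor_top S). \<forall>i\<in>D. y i = x i} \<subseteq> {x \<in> topspace (product_topology (\<lambda>_. discrete_topology UNIV) S). F x s \<in> U}"
        proof (rule subsetI)
          fix y assume y: "y \<in> {y \<in> topspace (cantor_top S). \<forall>i\<in>D. y i = x i}"
          then have yt: "y \<in> topspace (cantor_top S)" and ya: "\<forall>i\<in>D. y i = x i" by auto
          have "F y s = F x s" using Dd yt xt ya by blast
          then show "y \<in> {x \<in> topspace (product_topology (\<lambda>_. discrete_topology UNIV) S). F x s \<in> U}"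
            using x yt by (simp add: cantor_top_def)
        qed
      qed
    qed
  qed simp
qed

lemma cont_real:
  assumes D: "finite D" "D \<subseteq> S"
    and dep: "\<And>y y'. y \<in> topspace (cantor_top S) \<Longrightarrow> y' \<in> topspace (cantor_top S) \<Longrightarrow> (\<forall>i\<in>D. y i = y' i) \<Longrightarrow> f y = f y'"
  shows "continuous_map (cantor_top S) euclideanreal f"
  unfolding continuous_map
proof (intro conjI allI impI)
  fix U :: "real set"
  show "openin (cantor_top S) {x \<in> topspace (cantor_top S). f x \<in> U}"
  proof (subst openin_subopen, intro ballI)
    fix x assume x: "x \<in> {x \<in> topspace (cantor_top S). f x \<in> U}"
    show "\<exists>T. openin (cantor_top S) T \<and> x \<in> T \<and> T \<subseteq> {x \<in> topspace (cantor_top S). f x \<in> U}"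
    proof (intro exI conjI)
      show "openin (cantor_top S) {y \<in> topspace (cantor_top S). \<forall>i\<in>D. y i = x i}"
        using cyl_open[OF D] x by simp
      show "x \<in> {y \<in> topspace (cantor_top S). \<forall>i\<in>D. y i = x i}" using x by simp
      show "{y \<in> topspace (cantor_top S). \<forall>i\<in>D. y i = x i} \<subseteq> {x \<in> topspace (cantor_top S). f x \<in> U}"
      proof (rule subsetI)
        fix y assume y: "y \<in> {y \<in> topspace (cantor_top S). \<forall>i\<in>D. y i = x i}"
        then have yt: "y \<in> topspace (cantor_top S)" and ya: "\<forall>i\<in>D. y i = x i" by auto
        have "f y = f x" using dep[OF yt _ ya] x by simp
        then show "y \<in> {x \<in> topspace (cantor_top S). f x \<in> U}" using x yt by simp
      qed
    qed
  qed
qed simp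

section \<open>The global action\<close>

definition LL :: "'a set \<Rightarrow> 'a list set" where
  "LL S = {L. distinct L \<and> set L \<subseteq> S \<and> 2 \<le> length L}"

lemma exists_L:
  assumes "finite A" "A \<subseteq> S" "infinite S"
  shows "\<exists>L\<in>LL S. A \<subseteq> set L"
proof -
  have "S \<noteq> {}" using assms(3) by auto
  then obtain a where a: "a \<in> S" by blast
  have "infinite (S - {a})" using assms(3) by simp
  then have "S - {a} \<noteq> {}" by (intro notI) simp
  then obtain b where b: "b \<in> S - {a}" by blast
  define B where "B = A \<union> {a, b}"
  have fB: "finite B" using assms(1) by (simp add: B_def)
  obtain xs where xs: "set xs = B" "distinct xs" using finite_distinct_list[OF fB] by blast
  have "card {a, b} \<le> card B" using fB by (intro card_mono) (auto simp: B_def)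
  moreover have "card {a, b} = 2" using b by auto
  ultimately have "2 \<le> card B" by simp
  then have "2 \<le> length xs" using xs distinct_card[of xs] by simp
  moreover have "set xs \<subseteq> S" using xs assms(2) a b by (auto simp: B_def)
  ultimately show ?thesis using xs by (intro bexI[of _ xs]) (auto simp: LL_def B_def)
qed

locale glob =
  fixes S T :: "'a set" and e :: "'a \<Rightarrow> 'a list \<times> nat" and \<delta> :: "'a list \<times> nat \<times> nat \<Rightarrow> 'a"
  assumes bij: "bij_betw e S (LL S \<times> UNIV)"
    and dinj: "inj_on \<delta> (LL S \<times> UNIV)"
    and drng: "\<delta> ` (LL S \<times> UNIV) \<subseteq> T"
    and TS: "T \<subseteq> S"
    and infS: "infinite S"
begin

definition push :: "('a \<Rightarrow> bool) \<Rightarrow> ('a list \<times> nat \<Rightarrow> bool)" where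
  "push x = (\<lambda>i. x (inv_into S e i))"

definition pull :: "('a list \<times> nat \<Rightarrow> bool) \<Rightarrow> ('a \<Rightarrow> bool)" where
  "pull y = (\<lambda>s. if s \<in> S then y (e s) else undefined)"

definition act :: "('a \<times> bool) list \<Rightarrow> ('a \<Rightarrow> bool) \<Rightarrow> ('a \<Rightarrow> bool)" where
  "act g x = pull (gact \<delta> g (push x))"

lemma e_in: "s \<in> S \<Longrightarrow> e s \<in> LL S \<times> UNIV"
  using bij by (auto simp: bij_betw_def)

lemma e_inv: "s \<in> S \<Longrightarrow> inv_into S e (e s) = s"
  using bij by (simp add: bij_betw_def)

lemma inv_e: "i \<in> LL S \<times> UNIV \<Longrightarrow> e (inv_into S e i) = i"
  using bij by (simp add: bij_betw_def f_inv_into_f)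

lemma inv_in: "i \<in> LL S \<times> UNIV \<Longrightarrow> inv_into S e i \<in> S"
  using bij unfolding bij_betw_def by (auto intro: inv_into_into)

lemma pull_in: "pull y \<in> topspace (cantor_top S)"
  by (auto simp: pull_def top_cantor PiE_iff extensional_def)

lemma pull_push: "x \<in> topspace (cantor_top S) \<Longrightarrow> pull (push x) = x"
  by (auto simp: pull_def push_def top_cantor e_inv PiE_iff fun_eq_iff extensional_def)

lemma push_pull: "i \<in> LL S \<times> UNIV \<Longrightarrow> push (pull y) i = y i"
  by (simp add: push_def pull_def inv_in inv_e)

lemma pull_cong: "(\<And>i. i \<in> LL S \<times> UNIV \<Longrightarrow> y i = y' i) \<Longrightarrow> pull y = pull y'"
  by (auto simp: pull_def fun_eq_iff e_in)

lemma act_in: "act g x \<in> topspace (cantor_top S)"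
  by (simp add: act_def pull_in)

lemma act_Nil: "x \<in> topspace (cantor_top S) \<Longrightarrow> act [] x = x"
  by (simp add: act_def pull_push)

lemma act_append: "act (u @ v) x = act u (act v x)"
proof -
  have *: "gact \<delta> u (gact \<delta> v (push x)) i = gact \<delta> u (push (pull (gact \<delta> v (push x)))) i" if i: "i \<in> LL S \<times> UNIV" for i
  proof -
    obtain L n where Ln: "i = (L, n)" "L \<in> LL S" using i by auto
    show ?thesis unfolding Ln(1)
      by (rule gact_local_all) (use Ln push_pull in auto)
  qed
  show ?thesis unfolding act_def gact_append by (rule pull_cong) (rule *)
qed

lemma act_red: "act (red w) x = act w x"
  by (simp add: act_def gact_red)

lemma act_mult: "act (red (u @ v)) x = act u (act v x)"
  by (simp add: act_red act_append)

lemma act_cont: "continuous_map (cantor_top S) (cantor_top S) (act g)"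
proof (rule cont_fdep)
  fix s assume s: "s \<in> S"
  obtain L n where Ln: "e s = (L, n)" "L \<in> LL S" using e_in[OF s] by auto
  define N where "N = Suc n + length g * (4 * KL L + 2)"
  define D where "D = (\<lambda>j. inv_into S e (L, j)) ` {..<N}"
  show "\<exists>D. finite D \<and> D \<subseteq> S \<and> (\<forall>y\<in>topspace (cantor_top S). \<forall>y'\<in>topspace (cantor_top S). (\<forall>i\<in>D. y i = y' i) \<longrightarrow> act g y s = act g y' s)"
  proof (intro exI conjI ballI impI)
    show "finite D" by (simp add: D_def)
    show "D \<subseteq> S" using Ln(2) by (auto simp: D_def intro!: inv_in)
    fix y y' :: "'a \<Rightarrow> bool" assume ag: "\<forall>i\<in>D. y i = y' i"
    have "gact \<delta> g (push y) (L, n) = gact \<delta> g (push y') (L, n)"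
      by (rule gact_local) (use ag in \<open>auto simp: push_def D_def N_def\<close>)
    then show "act g y s = act g y' s" using s Ln by (simp add: act_def pull_def)
  qed
qed (rule act_in)

lemma act_homeo: "homeomorphic_map (cantor_top S) (cantor_top S) (act g)"
proof -
  have "homeomorphic_maps (cantor_top S) (cantor_top S) (act g) (act (iw g))"
    unfolding homeomorphic_maps_def
  proof (intro conjI ballI act_cont)
    fix x assume x: "x \<in> topspace (cantor_top S)"
    have "act (iw g) (act g x) = act (red (iw g @ g)) x" by (simp add: act_mult)
    also have "\<dots> = x" using x by (simp add: red_iw_w act_Nil)
    finally show "act (iw g) (act g x) = x" .
    have "act g (act (iw g) x) = act (red (g @ iw g)) x" by (simp add: act_mult)
    also have "\<dots> = x" using x by (simp add: red_w_iw act_Nil)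
    finally show "act g (act (iw g) x) = x" .
  qed
  then show ?thesis by (auto simp: homeomorphic_map_maps)
qed

theorem is_action_act: "is_action (free_group S) (cantor_top S) act"
  unfolding is_action_def
  by (simp add: act_homeo fg_one fg_mult act_Nil act_mult)

lemma ired_map:
  assumes "reduced g" "\<forall>a\<in>set g. fst a \<in> set L"
  shows "ired (map (idxL L) g)"
  unfolding ired_def
proof (intro allI impI)
  fix j assume j: "Suc j < length (map (idxL L) g)"
  show "map (idxL L) g ! Suc j \<noteq> iv (map (idxL L) g ! j)"
  proof
    assume "map (idxL L) g ! Suc j = iv (map (idxL L) g ! j)"
    then have "idxL L (g ! Suc j) = idxL L (ilet (g ! j))" using j by (simp add: idxL_ilet)
    then have "lett L (idxL L (g ! Suc j)) = lett L (idxL L (ilet (g ! j)))" by simp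
    then have "g ! Suc j = ilet (g ! j)" using assms(2) j by (simp add: lett_idxL)
    then show False using assms(1) j by (simp add: reduced_nth)
  qed
qed

theorem free_act: "free_action (free_group S) (cantor_top S) act"
  unfolding free_action_def
proof (intro ballI impI)
  fix g x assume g: "g \<in> carrier (free_group S)" and ne: "g \<noteq> \<one>\<^bsub>free_group S\<^esub>" and x: "x \<in> topspace (cantor_top S)"
  have gS: "fst ` set g \<subseteq> S" and gr: "reduced g" using g by (auto simp: fg_carrier)
  obtain L where L: "L \<in> LL S" "fst ` set g \<subseteq> set L" using exists_L[OF _ gS infS] by auto
  have L2: "2 \<le> length L" using L by (simp add: LL_def)
  interpret kk "KL L" using kk_KL[OF L2] .
  have gL: "\<forall>a\<in>set g. fst a \<in> set L" using L by auto
  show "act g x \<noteq> x"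
  proof
    assume fx: "act g x = x"
    have eq: "gact \<delta> g (push x) (L, n) = push x (L, n)" for n
    proof -
      have i: "(L, n) \<in> LL S \<times> UNIV" using L by simp
      have "act g x (inv_into S e (L, n)) = x (inv_into S e (L, n))" using fx by simp
      then show ?thesis using inv_in[OF i] inv_e[OF i] by (simp add: act_def pull_def push_def)
    qed
    have "fac (gact \<delta> g (push x)) L = fac (push x) L" using eq by (simp add: fac_def)
    then have "foldr (fstep (KL L)) (map (idxL L) g) (fac (push x) L) = fac (push x) L"
      using fac_gact[OF gL L2] by simp
    moreover have "foldr (fstep (KL L)) (map (idxL L) g) (fac (push x) L) \<noteq> fac (push x) L"
    proof (rule factor_free)
      show "\<forall>i\<in>set (map (idxL L) g). i < KL L"
      proof
        fix i assume "i \<in> set (map (idxL L) g)"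
        then obtain a where "a \<in> set g" "i = idxL L a" by auto
        then show "i < KL L" using gL idxL_less by blast
      qed
      show "ired (map (idxL L) g)" by (rule ired_map[OF gr gL])
      show "map (idxL L) g \<noteq> []" using ne by (simp add: fg_one)
    qed
    ultimately show False by simp
  qed
qed

end

context glob begin

lemma delta_inj3: "L \<in> LL S \<Longrightarrow> L' \<in> LL S \<Longrightarrow> \<delta> (L, n, k) = \<delta> (L', n', k') \<Longrightarrow> L = L' \<and> n = n' \<and> k = k'"
  using dinj unfolding inj_on_def by blast

lemma flip_word:
  assumes E: "finite E" "E \<subseteq> LL S \<times> UNIV" and C: "C \<subseteq> E"
  shows "\<exists>w. (\<forall>a\<in>set w. fst a \<in> T \<and> snd a) \<and> (\<forall>i\<in>E. gact \<delta> w y i = (if i \<in> C then \<not> y i else y i))"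
proof -
  have "finite C" using C E(1) by (rule finite_subset)
  then show ?thesis using C
  proof (induction C)
    case empty
    show ?case by (rule exI[of _ "[]"]) simp
  next
    case (insert c C)
    obtain w where w: "\<forall>a\<in>set w. fst a \<in> T \<and> snd a"
      and wE: "\<forall>i\<in>E. gact \<delta> w y i = (if i \<in> C then \<not> y i else y i)"
      using insert by blast
    have cE: "c \<in> LL S \<times> UNIV" using insert.prems E(2) by blast
    obtain L n where c: "c = (L, n)" "L \<in> LL S" using cE by (cases c) simp
    define Fb where "Fb = (\<Union>i\<in>E. set (fst i))"
    have fFb: "finite Fb" using E(1) by (simp add: Fb_def)
    have inj: "inj (\<lambda>k. \<delta> (L, n, k))"
    proof (rule injI)
      fix k1 k2 assume "\<delta> (L, n, k1) = \<delta> (L, n, k2)"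
      then show "k1 = k2" using delta_inj3[OF c(2) c(2)] by blast
    qed
    have "infinite (range (\<lambda>k. \<delta> (L, n, k)))"
    proof
      assume "finite (range (\<lambda>k. \<delta> (L, n, k)))"
      then have "finite (UNIV :: nat set)" using finite_imageD[OF _ inj] by blast
      then show False by simp
    qed
    then have "\<not> range (\<lambda>k. \<delta> (L, n, k)) \<subseteq> Fb" using fFb finite_subset by blast
    then obtain k where k: "\<delta> (L, n, k) \<notin> Fb" by blast
    define t where "t = \<delta> (L, n, k)"
    have tT: "t \<in> T" using drng c(2) by (auto simp: t_def)
    show ?case
    proof (intro exI conjI)
      show "\<forall>a\<in>set ((t, True) # w). fst a \<in> T \<and> snd a" using w tT by simp
      show "\<forall>i\<in>E. gact \<delta> ((t, True) # w) y i = (if i \<in> insert c C then \<not> y i else y i)"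
      proof
        fix i assume iE: "i \<in> E"
        obtain L' n' where i: "i = (L', n')" "L' \<in> LL S" using iE E by auto
        have "set L' \<subseteq> Fb" using iE i(1) unfolding Fb_def by force
        then have tL': "t \<notin> set L'" using k by (auto simp: t_def)
        have fl: "(\<exists>k'. \<delta> (L', n', k') = t) \<longleftrightarrow> i = c"
        proof
          assume "\<exists>k'. \<delta> (L', n', k') = t"
          then obtain k' where "\<delta> (L', n', k') = \<delta> (L, n, k)" by (auto simp: t_def)
          then show "i = c" using delta_inj3[OF i(2) c(2)] i c by simp
        next
          assume "i = c" then show "\<exists>k'. \<delta> (L', n', k') = t" using i c by (auto simp: t_def)
        qed
        have "gact \<delta> ((t, True) # w) y i = gstep \<delta> (t, True) (gact \<delta> w y) (L', n')"
          by (simp add: gact_Cons i)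
        also have "\<dots> = (if i = c then \<not> gact \<delta> w y i else gact \<delta> w y i)"
          using tL' fl by (simp add: gstep_apply i)
        also have "\<dots> = (if i \<in> insert c C then \<not> y i else y i)"
          using wE iE insert.hyps(2) by (cases "i = c") auto
        finally show "gact \<delta> ((t, True) # w) y i = (if i \<in> insert c C then \<not> y i else y i)" .
      qed
    qed
  qed
qed

lemma red_gen:
  assumes "\<forall>a\<in>set w. fst a \<in> T \<and> snd a"
  shows "red w \<in> generate (free_group S) (free_gen ` T)"
  using assms
proof (induction w)
  case Nil then show ?case using generate.one[of "free_group S" "free_gen ` T"] by (simp add: fg_one)
next
  case (Cons a w)
  obtain t where a: "a = (t, True)" "t \<in> T" using Cons.prems by (cases a) auto
  have g1: "free_gen t \<in> generate (free_group S) (free_gen ` T)" using a by (auto intro: generate.incl)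
  have g2: "red w \<in> generate (free_group S) (free_gen ` T)" using Cons by simp
  have "free_gen t \<otimes>\<^bsub>free_group S\<^esub> red w \<in> generate (free_group S) (free_gen ` T)"
    by (rule generate.eng[OF g1 g2])
  moreover have "free_gen t \<otimes>\<^bsub>free_group S\<^esub> red w = red (a # w)"
    by (simp add: fg_mult free_gen_def a red_red_right red_Cons red_reduced reduced_red)
  ultimately show ?case by simp
qed

theorem minimal_act: "minimal_on (generate (free_group S) (free_gen ` T)) (cantor_top S) act"
  unfolding minimal_on_def
proof (intro ballI)
  fix x assume x: "x \<in> topspace (cantor_top S)"
  show "cantor_top S closure_of (\<lambda>g. act g x) ` generate (free_group S) (free_gen ` T) = topspace (cantor_top S)"
    unfolding dense_intersects_open
  proof (intro allI impI)
    fix U assume U: "openin (cantor_top S) U \<and> U \<noteq> {}"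
    then obtain p where p: "p \<in> U" by blast
    have o: "openin (product_topology (\<lambda>_. discrete_topology (UNIV::bool set)) S) U" using U by (simp add: cantor_top_def)
    have "\<exists>V. finite {i \<in> S. V i \<noteq> topspace (discrete_topology (UNIV::bool set))} \<and>
                 (\<forall>i \<in> S. openin (discrete_topology UNIV) (V i)) \<and> p \<in> Pi\<^sub>E S V \<and> Pi\<^sub>E S V \<subseteq> U"
      using o[unfolded openin_product_topology_alt] p by (rule bspec)
    then obtain V where V: "finite {i \<in> S. V i \<noteq> topspace (discrete_topology (UNIV::bool set))}"
        "p \<in> PiE S V" "PiE S V \<subseteq> U"
      by (elim exE conjE) simp
    define D where "D = {i \<in> S. V i \<noteq> UNIV}"
    have fD: "finite D" using V(1) by (simp add: D_def)
    have DS: "D \<subseteq> S" by (auto simp: D_def)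
    define E where "E = e ` D"
    have fE: "finite E" using fD by (simp add: E_def)
    have ES: "E \<subseteq> LL S \<times> UNIV"
    proof
      fix j assume "j \<in> E"
      then obtain i where i: "i \<in> D" "j = e i" by (auto simp: E_def)
      then show "j \<in> LL S \<times> UNIV" using DS e_in[of i] by blast
    qed
    define C where "C = {j \<in> E. push x j \<noteq> push p j}"
    obtain w where w: "\<forall>a\<in>set w. fst a \<in> T \<and> snd a"
      and wE: "\<forall>i\<in>E. gact \<delta> w (push x) i = (if i \<in> C then \<not> push x i else push x i)"
      using flip_word[OF fE ES, of C "push x"] by (auto simp: C_def)
    have gen: "red w \<in> generate (free_group S) (free_gen ` T)" using red_gen[OF w] .
    have agree: "act (red w) x i = p i" if i: "i \<in> D" for i
    proof -
      have iS: "i \<in> S" using i DS by auto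
      have "act (red w) x i = gact \<delta> w (push x) (e i)" using iS by (simp add: act_def pull_def gact_red)
      also have "\<dots> = push p (e i)" using wE i by (auto simp: E_def C_def)
      also have "\<dots> = p i" using iS by (simp add: push_def e_inv)
      finally show ?thesis .
    qed
    have "act (red w) x \<in> PiE S V"
    proof -
      have "act (red w) x \<in> PiE S (\<lambda>_. UNIV)" using act_in by (simp add: top_cantor)
      moreover have "act (red w) x i \<in> V i" if i: "i \<in> S" for i
      proof (cases "i \<in> D")
        case True then show ?thesis using agree V(2) i by (auto simp: PiE_iff)
      next
        case False then show ?thesis using i by (auto simp: D_def)
      qed
      ultimately show ?thesis by (auto simp: PiE_iff)
    qed
    then have "act (red w) x \<in> U" using V(3) by blast
    then show "(\<lambda>g. act g x) ` generate (free_group S) (free_gen ` T) \<inter> U \<noteq> {}" using gen by blast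
  qed
qed

end

lemma sum_ind_const: "finite U1 \<Longrightarrow> (\<Sum>h\<in>U1. (if h \<in> V1 then w1 else 0)) = real (card (U1 \<inter> V1)) * w1"
proof -
  assume "finite U1"
  have "(\<Sum>h\<in>U1. (if h \<in> V1 then w1 else 0)) = (\<Sum>h\<in>U1 \<inter> V1. w1)"
    using sum.inter_restrict[of U1 "\<lambda>_. w1" V1] \<open>finite U1\<close> by simp
  then show ?thesis by simp
qed

lemma l1_bound:
  fixes A B Cm Xc :: "'b set" and n d :: nat
  assumes fin: "finite A" "finite B" and CA: "Cm \<subseteq> A" and CB: "Cm \<subseteq> B"
    and cA: "card A \<le> n" and cB: "card B \<le> n" and cC: "n - d \<le> card Cm"
    and Xc: "A \<subseteq> Xc" "B \<subseteq> Xc" and n: "0 < n"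
  shows "infsum (\<lambda>h. \<bar>(if h \<in> A then 1 / real n else 0) - (if h \<in> B then 1 / real n else 0)\<bar>) Xc \<le> 2 * real d / real n"
proof -
  let ?f = "\<lambda>h. \<bar>(if h \<in> A then 1 / real n else 0) - (if h \<in> B then 1 / real n else 0)\<bar>"
  have fU: "finite (A \<union> B)" using fin by simp
  have "infsum ?f Xc = infsum ?f (A \<union> B)"
    by (rule infsum_cong_neutral) (use Xc in auto)
  also have "\<dots> = sum ?f (A \<union> B)" using fU by simp
  also have "\<dots> \<le> (\<Sum>h\<in>A \<union> B. (if h \<in> A - Cm then 1 / real n else 0) + (if h \<in> B - Cm then 1 / real n else 0))"
  proof (rule sum_mono)
    fix h assume "h \<in> A \<union> B"
    show "?f h \<le> (if h \<in> A - Cm then 1 / real n else 0) + (if h \<in> B - Cm then 1 / real n else 0)"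
      using CA CB by (cases "h \<in> A"; cases "h \<in> B"; cases "h \<in> Cm") auto
  qed
  also have "\<dots> = real (card (A - Cm)) * (1 / real n) + real (card (B - Cm)) * (1 / real n)"
  proof -
    have e1: "(A \<union> B) \<inter> (A - Cm) = A - Cm" and e2: "(A \<union> B) \<inter> (B - Cm) = B - Cm" by auto
    show ?thesis by (simp only: sum.distrib sum_ind_const[OF fU] e1 e2)
  qed
  also have "\<dots> \<le> 2 * real d / real n"
  proof -
    have fC: "finite Cm" using CA fin(1) finite_subset by blast
    have "card (A - Cm) = card A - card Cm" using CA fin(1) by (simp add: card_Diff_subset fC)
    then have "card (A - Cm) \<le> d" using cA cC by linarith
    moreover have "card (B - Cm) = card B - card Cm" using CB fin(2) by (simp add: card_Diff_subset fC)
    then have "card (B - Cm) \<le> d" using cB cC by linarith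
    ultimately have "real (card (A - Cm)) + real (card (B - Cm)) \<le> 2 * real d" by simp
    then have "(real (card (A - Cm)) + real (card (B - Cm))) / real n \<le> 2 * real d / real n"
      using n by (simp add: divide_right_mono)
    then show ?thesis by (simp add: add_divide_distrib)
  qed
  finally show ?thesis .
qed

definition pw :: "(nat \<Rightarrow> nat) \<Rightarrow> 'a list \<Rightarrow> nat \<Rightarrow> ('a \<times> bool) list" where
  "pw \<xi> L k = map (lett L) (map \<xi> [0..<k])"

lemma length_pw[simp]: "length (pw \<xi> L k) = k" by (simp add: pw_def)

lemma pw_carrier:
  assumes L: "L \<in> LL S" and lt: "\<And>i. \<xi> i < KL L" and rd: "\<And>i. \<xi> (Suc i) \<noteq> iv (\<xi> i)"
  shows "pw \<xi> L k \<in> carrier (free_group S)"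
  unfolding fg_carrier
proof
  show "fst ` set (pw \<xi> L k) \<subseteq> S"
  proof
    fix s assume "s \<in> fst ` set (pw \<xi> L k)"
    then obtain j where "s = fst (lett L (\<xi> j))" by (auto simp: pw_def)
    then show "s \<in> S" using L lett_in[OF lt] by (auto simp: LL_def)
  qed
  show "reduced (pw \<xi> L k)"
    unfolding reduced_nth
  proof (intro allI impI)
    fix j assume j: "Suc j < length (pw \<xi> L k)"
    show "pw \<xi> L k ! Suc j \<noteq> ilet (pw \<xi> L k ! j)"
    proof
      assume "pw \<xi> L k ! Suc j = ilet (pw \<xi> L k ! j)"
      then have "lett L (\<xi> (Suc j)) = lett L (iv (\<xi> j))" using j by (simp add: pw_def lett_iv)
      moreover have "distinct L" using L by (simp add: LL_def)
      moreover have "iv (\<xi> j) < KL L" using lt iv_less[of "KL L" "\<xi> j"] by (simp add: KL_def)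
      ultimately have "\<xi> (Suc j) = iv (\<xi> j)" using lett_inj lt by blast
      then show False using rd by blast
    qed
  qed
qed

lemma map_pre_upt: "map (pre xs y) [0..<length xs + i] = xs @ map y [0..<i]"
proof (induction i)
  case 0 then show ?case by (intro nth_equalityI) (simp_all add: pre_def)
next
  case (Suc i) then show ?case by (simp add: pre_def)
qed

lemma map_sh_upt: "map (sh c y) [0..<i] = map y [c..<c + i]"
proof -
  have "map (sh c y) [0..<i] = map y (map (\<lambda>j. j + c) [0..<i])" by (simp add: sh_def comp_def)
  also have "map (\<lambda>j. j + c) [0..<i] = [c..<c + i]" by (simp add: map_add_upt add.commute)
  finally show ?thesis .
qed

context glob begin

theorem amen_act: "amenable_action (free_group S) (cantor_top S) act"
  unfolding amenable_action_def
proof (intro allI impI)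
  fix F :: "('a \<times> bool) list set" and \<epsilon> :: real
  assume H: "finite F \<and> F \<subseteq> carrier (free_group S) \<and> \<epsilon> > 0"
  then have fF: "finite F" and FC: "F \<subseteq> carrier (free_group S)" and eps: "\<epsilon> > 0" by auto
  define L0 where "L0 = (\<Union>g\<in>F. fst ` set g)"
  have fL0: "finite L0" using fF by (simp add: L0_def)
  have L0S: "L0 \<subseteq> S"
  proof
    fix s assume "s \<in> L0"
    then obtain g where g: "g \<in> F" "s \<in> fst ` set g" by (auto simp: L0_def)
    have "g \<in> carrier (free_group S)" using FC g(1) by blast
    then have "fst ` set g \<subseteq> S" by (simp add: fg_carrier)
    then show "s \<in> S" using g(2) by blast
  qed
  obtain L where L: "L \<in> LL S" "L0 \<subseteq> set L" using exists_L[OF fL0 L0S infS] by blast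
  have L2: "2 \<le> length L" and dL: "distinct L" using L by (auto simp: LL_def)
  interpret kk "KL L" using kk_KL[OF L2] .
  define K where "K = KL L"
  define Mx where "Mx = (\<Sum>g\<in>F. length g)"
  define n :: nat where "n = nat \<lceil>2 * real (Suc Mx) / \<epsilon>\<rceil> + Suc Mx"
  have npos: "0 < n" by (simp add: n_def)
  have gle: "length g \<le> Mx" if "g \<in> F" for g
    using member_le_sum[of g F length] that fF by (simp add: Mx_def)
  have nM: "Mx < n" by (simp add: n_def)
  have neps: "2 * real Mx / real n \<le> \<epsilon>"
  proof -
    have "2 * real (Suc Mx) / \<epsilon> \<le> real n" by (simp add: n_def) linarith
    then have "2 * real (Suc Mx) \<le> \<epsilon> * real n" using eps by (simp add: field_simps)
    then have "2 * real Mx \<le> \<epsilon> * real n" by simp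
    then show ?thesis using npos by (simp add: field_simps)
  qed
  define \<xi> where "\<xi> x = dec K (fst (fac (push x) L))" for x
  define P where "P x = (\<lambda>k. pw (\<xi> x) L k) ` {..<n}" for x
  define m where "m x h = (if h \<in> P x then 1 / real n else 0)" for x h
  have \<xi>lt: "\<xi> x i < KL L" for x i using dec_less by (simp add: \<xi>_def K_def)
  have \<xi>rd: "\<xi> x (Suc i) \<noteq> iv (\<xi> x i)" for x i using dec_red by (simp add: \<xi>_def K_def)
  have PC: "P x \<subseteq> carrier (free_group S)" for x
  proof
    fix h assume "h \<in> P x"
    then obtain k where "h = pw (\<xi> x) L k" by (auto simp: P_def)
    moreover have "pw (\<xi> x) L k \<in> carrier (free_group S)"
      by (rule pw_carrier[OF L(1)]) (rule \<xi>lt, rule \<xi>rd)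
    ultimately show "h \<in> carrier (free_group S)" by simp
  qed
  have fP: "finite (P x)" for x by (simp add: P_def)
  have cP: "card (P x) = n" for x
  proof -
    have "inj_on (\<lambda>k. pw (\<xi> x) L k) {..<n}"
    proof (rule inj_onI)
      fix k1 k2 assume "pw (\<xi> x) L k1 = pw (\<xi> x) L k2"
      then have "length (pw (\<xi> x) L k1) = length (pw (\<xi> x) L k2)" by simp
      then show "k1 = k2" by simp
    qed
    then show ?thesis by (simp add: P_def card_image)
  qed
  show "\<exists>m. (\<forall>x\<in>topspace (cantor_top S). prob_fun (free_group S) (m x)) \<and>
        (\<forall>h. continuous_map (cantor_top S) euclideanreal (\<lambda>x. m x h)) \<and>
        (\<forall>g\<in>F. \<forall>x\<in>topspace (cantor_top S). l1_dist (free_group S) (m (act g x)) (translate (free_group S) g (m x)) \<le> \<epsilon>)"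
  proof (intro exI[of _ m] conjI ballI allI)
    fix x assume x: "x \<in> topspace (cantor_top S)"
    show "prob_fun (free_group S) (m x)"
      unfolding prob_fun_def
    proof (intro conjI allI impI)
      fix h show "0 \<le> m x h" by (simp add: m_def)
    next
      fix h assume "h \<notin> carrier (free_group S)"
      then show "m x h = 0" using PC by (auto simp: m_def)
    next
      show "(m x has_sum 1) (carrier (free_group S))"
      proof (rule has_sum_finite_neutralI[OF fP PC])
        show "\<And>h. h \<in> carrier (free_group S) - P x \<Longrightarrow> m x h = 0" by (simp add: m_def)
        show "1 = sum (m x) (P x)" using cP npos by (simp add: m_def)
      qed
    qed
  next
    fix h
    define D where "D = (\<lambda>j. inv_into S e (L, 2 * j)) ` {..< n * K}"
    show "continuous_map (cantor_top S) euclideanreal (\<lambda>x. m x h)"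
    proof (rule cont_real[of D])
      show "finite D" by (simp add: D_def)
      show "D \<subseteq> S" using L(1) by (auto simp: D_def intro!: inv_in)
      fix y y' :: "'a \<Rightarrow> bool" assume ag: "\<forall>i\<in>D. y i = y' i"
      have "\<xi> y k = \<xi> y' k" if k: "k < n" for k
        unfolding \<xi>_def K_def
      proof (rule dec_dep)
        fix j assume "j < Suc k * KL L"
        moreover have "Suc k * KL L \<le> n * K" unfolding K_def by (rule mult_le_mono1) (use k in simp)
        ultimately have "j < n * K" by linarith
        then show "fst (fac (push y) L) j = fst (fac (push y') L) j"
          using ag by (simp add: fac_def push_def D_def)
      qed
      then have "pw (\<xi> y) L k = pw (\<xi> y') L k" if "k < n" for k
        using that by (simp add: pw_def)
      then have "P y = P y'" by (auto simp: P_def image_def)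
      then show "m y h = m y' h" by (simp add: m_def)
    qed
  next
    fix g x assume gF: "g \<in> F" and x: "x \<in> topspace (cantor_top S)"
    have gC: "g \<in> carrier (free_group S)" using gF FC by auto
    have gL: "\<forall>a\<in>set g. fst a \<in> set L" using gF L(2) by (auto simp: L0_def)
    have lg: "length g < n" using gle[OF gF] nM by simp
    have fpush: "fac (push (act g x)) L = fac (gact \<delta> g (push x)) L"
      using L(1) by (simp add: fac_def act_def push_pull)
    also have "\<dots> = foldr (fstep K) (map (idxL L) g) (fac (push x) L)"
      using fac_gact[OF gL L2] by (simp add: K_def)
    finally have fpush: "fac (push (act g x)) L = foldr (fstep K) (map (idxL L) g) (fac (push x) L)" .
    have mK: "\<forall>i\<in>set (map (idxL L) g). i < K"
    proof
      fix i assume "i \<in> set (map (idxL L) g)"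
      then obtain a where "a \<in> set g" "i = idxL L a" by auto
      then show "i < K" using gL idxL_less[of a L] by (simp add: K_def)
    qed
    have "reduced g" using gC by (simp add: fg_carrier)
    then have ig: "ired (map (idxL L) g)" using ired_map gL by blast
    obtain g1 g2 where gg: "map (idxL L) g = g1 @ g2"
      and pref: "\<forall>i<length g2. dec K (fst (fac (push x) L)) i = iv (g2 ! (length g2 - Suc i))"
      and dq: "dec K (fst (foldr (fstep K) (map (idxL L) g) (fac (push x) L))) =
               pre g1 (sh (length g2) (dec K (fst (fac (push x) L))))"
    proof -
      from closed_form[OF mK[unfolded K_def] ig, where p = "fac (push x) L"]
      obtain g1 g2 where "map (idxL L) g = g1 @ g2"
        "\<forall>i<length g2. dec (KL L) (fst (fac (push x) L)) i = iv (g2 ! (length g2 - Suc i))"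
        "dec (KL L) (fst (foldr (fstep (KL L)) (map (idxL L) g) (fac (push x) L))) =
               pre g1 (sh (length g2) (dec (KL L) (fst (fac (push x) L))))"
        by blast
      then show ?thesis using that unfolding K_def by blast
    qed
    define c where "c = length g2"
    have \<xi>g: "\<xi> (act g x) = pre g1 (sh c (\<xi> x))" using dq fpush by (simp add: \<xi>_def c_def)
    have \<xi>pref: "\<xi> x i = iv (g2 ! (c - Suc i))" if "i < c" for i using pref that by (simp add: \<xi>_def c_def)
    define G1 where "G1 = map (lett L) g1"
    define G2 where "G2 = map (lett L) g2"
    have gG: "g = G1 @ G2"
    proof -
      have "map (lett L) (map (idxL L) g) = g" using gL by (induction g) (auto simp: lett_idxL)
      then show ?thesis using gg by (simp add: G1_def G2_def)
    qed
    have lens: "length g = length g1 + c" using gG by (simp add: G1_def G2_def c_def)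
    define U where "U i = map (lett L) (map (\<xi> x) [c..<c + i])" for i
    have pwA: "pw (\<xi> (act g x)) L (length g1 + i) = G1 @ U i" for i
      by (simp add: pw_def \<xi>g map_pre_upt map_sh_upt G1_def U_def)
    have pwB: "pw (\<xi> x) L (c + i) = iw G2 @ U i" for i
    proof -
      have "map (\<xi> x) [0..<c] = rev (map iv g2)"
        by (rule nth_equalityI) (auto simp: \<xi>pref rev_nth c_def)
      then have "map (lett L) (map (\<xi> x) [0..<c]) = iw G2"
        by (simp add: iw_def G2_def rev_map lett_iv comp_def)
      moreover have "[0..<c + i] = [0..<c] @ [c..<c + i]" by (rule upt_add_eq_append) simp
      ultimately show ?thesis by (simp add: pw_def U_def)
    qed
    define A where "A = P (act g x)"
    define B where "B = {h \<in> carrier (free_group S). red (iw g @ h) \<in> P x}"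
    define Cm where "Cm = (\<lambda>i. pw (\<xi> (act g x)) L (length g1 + i)) ` {..< n - length g}"
    have CA: "Cm \<subseteq> A"
    proof
      fix h assume "h \<in> Cm"
      then obtain i where i: "i < n - length g" "h = pw (\<xi> (act g x)) L (length g1 + i)" by (auto simp: Cm_def)
      have "length g1 + i < n" using i lens by linarith
      then show "h \<in> A" using i by (auto simp: A_def P_def)
    qed
    have AC: "A \<subseteq> carrier (free_group S)" using PC by (simp add: A_def)
    have CB: "Cm \<subseteq> B"
    proof
      fix h assume h: "h \<in> Cm"
      then obtain i where i: "i < n - length g" "h = pw (\<xi> (act g x)) L (length g1 + i)" by (auto simp: Cm_def)
      have hC: "h \<in> carrier (free_group S)" using h CA AC by auto
      have ci: "c + i < n" using i lens by linarith
      have pC: "pw (\<xi> x) L (c + i) \<in> carrier (free_group S)" using PC ci by (auto simp: P_def)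
      have iwg: "iw g = iw G2 @ iw G1" using gG by (simp add: iw_append)
      have "red (iw g @ h) = red (iw G2 @ iw G1 @ G1 @ U i)"
        by (simp only: iwg i(2) pwA append_assoc)
      also have "\<dots> = red (iw G2 @ U i)" by (rule red_cancel_mid2)
      also have "\<dots> = pw (\<xi> x) L (c + i)" using pC by (simp add: pwB[symmetric] red_reduced fg_carrier)
      finally have "red (iw g @ h) \<in> P x" using ci by (auto simp: P_def)
      then show "h \<in> B" using hC by (simp add: B_def)
    qed
    have BC: "B \<subseteq> carrier (free_group S)" by (auto simp: B_def)
    have Bsub: "B \<subseteq> (\<lambda>p. red (g @ p)) ` P x"
    proof
      fix h assume h: "h \<in> B"
      then have hr: "reduced h" and hp: "red (iw g @ h) \<in> P x" by (auto simp: B_def fg_carrier)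
      have "red (g @ red (iw g @ h)) = red (g @ iw g @ h)" by (simp add: red_red_right)
      also have "\<dots> = red h" using red_cancel_mid[of "[]" g h] by simp
      also have "\<dots> = h" using hr by (simp add: red_reduced)
      finally show "h \<in> (\<lambda>p. red (g @ p)) ` P x" using hp by (auto intro!: image_eqI[of _ _ "red (iw g @ h)"])
    qed
    have fB: "finite B" by (rule finite_subset[OF Bsub finite_imageI[OF fP]])
    have cB1: "card B \<le> card ((\<lambda>p. red (g @ p)) ` P x)" by (rule card_mono[OF finite_imageI[OF fP] Bsub])
    have cB2: "card ((\<lambda>p. red (g @ p)) ` P x) \<le> card (P x)" by (rule card_image_le[OF fP])
    have cB: "card B \<le> n" using cB1 cB2 cP[of x] by linarith
    have cA: "card A \<le> n" using cP by (simp add: A_def)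
    have cC: "n - length g \<le> card Cm"
    proof -
      have "inj_on (\<lambda>i. pw (\<xi> (act g x)) L (length g1 + i)) {..< n - length g}"
      proof (rule inj_onI)
        fix k1 k2 assume "pw (\<xi> (act g x)) L (length g1 + k1) = pw (\<xi> (act g x)) L (length g1 + k2)"
        then have "length (pw (\<xi> (act g x)) L (length g1 + k1)) = length (pw (\<xi> (act g x)) L (length g1 + k2))" by simp
        then show "k1 = k2" by simp
      qed
      then show ?thesis by (simp add: Cm_def card_image)
    qed
    have trans: "translate (free_group S) g (m x) h = (if h \<in> B then 1 / real n else 0)"
      if h: "h \<in> carrier (free_group S)" for h
      using h gC by (simp add: translate_def fg_inv fg_mult m_def B_def)
    have "l1_dist (free_group S) (m (act g x)) (translate (free_group S) g (m x)) =
          infsum (\<lambda>h. \<bar>(if h \<in> A then 1 / real n else 0) - (if h \<in> B then 1 / real n else 0)\<bar>) (carrier (free_group S))"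
      unfolding l1_dist_def by (rule infsum_cong) (simp add: trans m_def A_def)
    also have "\<dots> \<le> 2 * real (length g) / real n"
      by (rule l1_bound[OF _ fB CA CB cA cB cC AC BC npos]) (simp add: A_def fP)
    also have "\<dots> \<le> 2 * real Mx / real n"
      using gle[OF gF] npos by (simp add: divide_right_mono)
    also have "\<dots> \<le> \<epsilon>" by (rule neps)
    finally show "l1_dist (free_group S) (m (act g x)) (translate (free_group S) g (m x)) \<le> \<epsilon>" .
  qed
qed

end

lemma times_self_lepoll: "infinite A \<Longrightarrow> A \<times> A \<lesssim> A"
  using card_of_Times_same_infinite[of A] eqpoll_iff_card_of_ordIso eqpoll_imp_lepoll by blast

lemma lists_lepoll_inf:
  assumes inf: "infinite A"
  shows "lists A \<lesssim> A"
proof -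
  define Ln where "Ln n = {xs \<in> lists A. length xs = n}" for n
  have AA: "A \<times> A \<lesssim> A" using times_self_lepoll[OF inf] .
  have ne: "A \<noteq> {}" using inf by auto
  then obtain a0 where a0: "a0 \<in> A" by blast
  have Ln: "Ln n \<lesssim> A" for n
  proof (induction n)
    case 0
    have "Ln 0 = {[]}" by (auto simp: Ln_def)
    moreover have "{[]} \<lesssim> A" unfolding lepoll_def using a0
      by (intro exI[of _ "\<lambda>_. a0"]) auto
    ultimately show ?case by simp
  next
    case (Suc n)
    have "Ln (Suc n) \<lesssim> A \<times> Ln n"
      unfolding lepoll_def
    proof (intro exI[of _ "\<lambda>xs. (hd xs, tl xs)"] conjI)
      show "inj_on (\<lambda>xs. (hd xs, tl xs)) (Ln (Suc n))"
      proof (rule inj_onI)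
        fix xs ys assume "xs \<in> Ln (Suc n)" "ys \<in> Ln (Suc n)" "(hd xs, tl xs) = (hd ys, tl ys)"
        then show "xs = ys" by (cases xs; cases ys) (auto simp: Ln_def)
      qed
      show "(\<lambda>xs. (hd xs, tl xs)) ` Ln (Suc n) \<subseteq> A \<times> Ln n"
      proof
        fix p assume "p \<in> (\<lambda>xs. (hd xs, tl xs)) ` Ln (Suc n)"
        then obtain xs where xs: "xs \<in> Ln (Suc n)" "p = (hd xs, tl xs)" by blast
        then obtain y ys where "xs = y # ys" by (cases xs) (auto simp: Ln_def)
        then show "p \<in> A \<times> Ln n" using xs by (auto simp: Ln_def)
      qed
    qed
    also have "A \<times> Ln n \<lesssim> A \<times> A" by (rule times_lepoll_mono[OF lepoll_refl Suc.IH])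
    also have "\<dots> \<lesssim> A" by (rule AA)
    finally show ?case .
  qed
  then have "\<forall>n. \<exists>f. inj_on f (Ln n) \<and> f ` Ln n \<subseteq> A" unfolding lepoll_def by blast
  then obtain f where f: "\<And>n. inj_on (f n) (Ln n) \<and> f n ` Ln n \<subseteq> A"
    using choice[of "\<lambda>n f. inj_on f (Ln n) \<and> f ` Ln n \<subseteq> A"] by blast
  have "lists A \<lesssim> (UNIV::nat set) \<times> A"
    unfolding lepoll_def
  proof (intro exI[of _ "\<lambda>xs. (length xs, f (length xs) xs)"] conjI)
    show "inj_on (\<lambda>xs. (length xs, f (length xs) xs)) (lists A)"
    proof (rule inj_onI)
      fix xs ys assume xs: "xs \<in> lists A" and ys: "ys \<in> lists A"
        and e: "(length xs, f (length xs) xs) = (length ys, f (length ys) ys)"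
      then have l: "length xs = length ys" by simp
      have "xs \<in> Ln (length xs)" "ys \<in> Ln (length xs)" using xs ys l by (auto simp: Ln_def)
      moreover have "f (length xs) xs = f (length xs) ys" using e l by simp
      ultimately show "xs = ys" using f[of "length xs"] by (auto dest: inj_onD)
    qed
    show "(\<lambda>xs. (length xs, f (length xs) xs)) ` lists A \<subseteq> UNIV \<times> A"
    proof
      fix p assume "p \<in> (\<lambda>xs. (length xs, f (length xs) xs)) ` lists A"
      then obtain xs where xs: "xs \<in> lists A" "p = (length xs, f (length xs) xs)" by blast
      have "xs \<in> Ln (length xs)" using xs by (simp add: Ln_def)
      then have "f (length xs) xs \<in> A" using f by blast
      then show "p \<in> UNIV \<times> A" using xs by simp
    qed
  qed
  also have "(UNIV::nat set) \<times> A \<lesssim> A \<times> A"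
    by (rule times_lepoll_mono[OF _ lepoll_refl]) (use inf infinite_le_lepoll in blast)
  also have "\<dots> \<lesssim> A" by (rule AA)
  finally show ?thesis .
qed

lemma LL_lepoll: "infinite S \<Longrightarrow> LL S \<lesssim> S"
proof -
  assume inf: "infinite S"
  have "LL S \<subseteq> lists S" by (auto simp: LL_def)
  then have "LL S \<lesssim> lists S" by (rule subset_imp_lepoll)
  also have "\<dots> \<lesssim> S" by (rule lists_lepoll_inf[OF inf])
  finally show ?thesis .
qed

lemma bij_e: assumes inf: "infinite S" shows "\<exists>e. bij_betw e S (LL S \<times> (UNIV::nat set))"
proof -
  have AA: "S \<times> S \<lesssim> S" using times_self_lepoll[OF inf] .
  have nS: "(UNIV::nat set) \<lesssim> S" using inf infinite_le_lepoll by blast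
  have "LL S \<times> (UNIV::nat set) \<lesssim> S \<times> S" by (rule times_lepoll_mono[OF LL_lepoll[OF inf] nS])
  also have "\<dots> \<lesssim> S" by (rule AA)
  finally have le1: "LL S \<times> (UNIV::nat set) \<lesssim> S" .
  have "S \<noteq> {}" using inf by auto
  then obtain a0 where a0: "a0 \<in> S" by blast
  have "infinite (S - {a0})" using inf by simp
  then have "S - {a0} \<noteq> {}" by (intro notI) simp
  then obtain a1 where a1: "a1 \<in> S" "a1 \<noteq> a0" by blast
  define h where "h s = (if s = a0 then ([a0, a1], 0::nat) else ([s, a0], 0))" for s
  have le2: "S \<lesssim> LL S \<times> (UNIV::nat set)"
    unfolding lepoll_def
  proof (intro exI[of _ h] conjI)
    show "inj_on h S"
    proof (rule inj_onI)
      fix s t assume "s \<in> S" "t \<in> S" "h s = h t"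
      then show "s = t" using a1 by (auto simp: h_def split: if_splits)
    qed
    show "h ` S \<subseteq> LL S \<times> UNIV"
      using a0 a1 by (auto simp: h_def LL_def)
  qed
  have "S \<approx> LL S \<times> (UNIV::nat set)" by (rule lepoll_antisym[OF le2 le1])
  then show ?thesis by (simp add: eqpoll_def)
qed

lemma inj_delta:
  assumes inf: "infinite S" and TS: "T \<approx> S"
  shows "\<exists>\<delta>. inj_on \<delta> (LL S \<times> (UNIV::(nat \<times> nat) set)) \<and> \<delta> ` (LL S \<times> UNIV) \<subseteq> T"
proof -
  have AA: "S \<times> S \<lesssim> S" using times_self_lepoll[OF inf] .
  have nS: "(UNIV::nat set) \<lesssim> S" using inf infinite_le_lepoll by blast
  have "(UNIV::(nat \<times> nat) set) \<lesssim> S \<times> S"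
    using times_lepoll_mono[OF nS nS] by (simp add: UNIV_Times_UNIV)
  also have "\<dots> \<lesssim> S" by (rule AA)
  finally have nnS: "(UNIV::(nat \<times> nat) set) \<lesssim> S" .
  have "LL S \<times> (UNIV::(nat \<times> nat) set) \<lesssim> S \<times> S" by (rule times_lepoll_mono[OF LL_lepoll[OF inf] nnS])
  also have "\<dots> \<lesssim> S" by (rule AA)
  also have "S \<lesssim> T" using TS by (simp add: eqpoll_sym eqpoll_imp_lepoll)
  finally show ?thesis unfolding lepoll_def by blast
qed

theorem proposition6p8:
  fixes S T :: "'a set"
  assumes "infinite S" and "T \<subseteq> S" and "T \<approx> S"
  shows "\<exists>act :: ('a \<times> bool) list \<Rightarrow> ('a \<Rightarrow> bool) \<Rightarrow> ('a \<Rightarrow> bool).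
           is_action (free_group S) (cantor_top S) act \<and>
           amenable_action (free_group S) (cantor_top S) act \<and>
           free_action (free_group S) (cantor_top S) act \<and>
           minimal_on (generate (free_group S) (free_gen ` T)) (cantor_top S) act"
proof -
  obtain e where e: "bij_betw e S (LL S \<times> (UNIV::nat set))" using bij_e[OF assms(1)] by blast
  obtain \<delta> :: "'a list \<times> nat \<times> nat \<Rightarrow> 'a" where d: "inj_on \<delta> (LL S \<times> UNIV)" "\<delta> ` (LL S \<times> UNIV) \<subseteq> T"
    using inj_delta[OF assms(1) assms(3)] by blast
  interpret glob S T e \<delta>
    by unfold_locales (use e d assms in auto)
  show ?thesis
    by (intro exI[of _ act] conjI is_action_act amen_act free_act minimal_act)
qed

end
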